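(* Let $A$ be an $n\times n$ matrix with a blocking of $n_t$ blocks and largest block size $n_b$, and let $A=LR$ be the block LU factorization produced by the block LU algorithm in which every diagonal block $L_{kk}$ is unitary. (a) If $A$ is nonsingular and diagonally dominant by columns (i.e. $|a_{jj}|\ge\sum_{i\ne j}|a_{ij}|$ for all $j$), then $\|L\|_2\le(n_b^{3/2}+1)n_t$. (b) If $A$ is symmetric positive definite, then $\|L\|_2\le(\kappa_2(A)^{1/2}+1)n_t$.
   Context: Blocking: a strictly increasing list $[1=\mathcal{I}_1<\dots<\mathcal{I}_{n_t+1}=n+1]$ defining blocks $A_{i,j}$ (rows $\mathcal{I}_i:\mathcal{I}_{i+1}-1$, columns $\mathcal{I}_j:\mathcal{I}_{j+1}-1$). Block LU algorithm: $A^{(1)}=A$; for $k=1,\dots,n_t$, factor $A^{(k)}_{kk}=L_{kk}R_{kk}$, set $L_{k+1:n_t,k}=A^{(k)}_{k+1:n_t,k}R_{kk}^{-1}$, $R_{k,k+1:n_t}=L_{kk}^{-1}A^{(k)}_{k,k+1:n_t}$, $A^{(k+1)}=A^{(k)}_{k+1:n_t,k+1:n_t}-L_{k+1:n_t,k}R_{k,k+1:n_t}$. $\|\cdot\|_2$ is the spectral norm and $\kappa_2(A)=\|A\|_2\|A^{-1}\|_2$. *)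

theory Defs
  imports Complex_Main "Jordan_Normal_Form.Schur_Decomposition" "Jordan_Normal_Form.DL_Submatrix"
begin

(* Blockings are 0-based: a list I = [I!0 = 0 < I!1 < ... < I!nt = n];
   block k consists of the indices {I!k ..< I!(k+1)}  (k < nt). *)

definition is_blocking :: "nat list \<Rightarrow> nat \<Rightarrow> bool" where
  "is_blocking I n \<longleftrightarrow> length I \<ge> 1 \<and> sorted_wrt (<) I \<and> I ! 0 = 0 \<and> last I = n"

definition num_blocks :: "nat list \<Rightarrow> nat" where
  "num_blocks I = length I - 1"

definition blk :: "nat list \<Rightarrow> nat \<Rightarrow> nat set" where
  "blk I k = {I ! k ..< I ! Suc k}"

definition max_block_size :: "nat list \<Rightarrow> nat" where
  "max_block_size I = Max (insert 0 {I ! Suc k - I ! k | k. k < num_blocks I})"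

definition block :: "'a mat \<Rightarrow> nat list \<Rightarrow> nat \<Rightarrow> nat \<Rightarrow> 'a mat" where
  "block M I i j = submatrix M (blk I i) (blk I j)"

definition unitary_mat :: "complex mat \<Rightarrow> bool" where
  "unitary_mat U \<longleftrightarrow> square_mat U \<and>
     mat_adjoint U * U = 1\<^sub>m (dim_row U) \<and> U * mat_adjoint U = 1\<^sub>m (dim_row U)"

(* Outputs (L, R) of the block LU algorithm with unitary diagonal blocks L_kk.
   S k is the Schur complement A^(k), stored in global coordinates
   (only the trailing rows/columns >= I!k are used). *)
definition block_LU_unitary :: "complex mat \<Rightarrow> nat list \<Rightarrow> complex mat \<Rightarrow> complex mat \<Rightarrow> bool" where
  "block_LU_unitary A I L R \<longleftrightarrow>
    (let n = dim_row A; nt = num_blocks I in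
     L \<in> carrier_mat n n \<and> R \<in> carrier_mat n n \<and>
     (\<forall>i j. i < nt \<and> j < nt \<and> i < j \<longrightarrow>
         block L I i j = 0\<^sub>m (card (blk I i)) (card (blk I j))) \<and>
     (\<forall>i j. i < nt \<and> j < nt \<and> j < i \<longrightarrow>
         block R I i j = 0\<^sub>m (card (blk I i)) (card (blk I j))) \<and>
     (\<exists>S :: nat \<Rightarrow> complex mat.
        S 0 = A \<and>
        (\<forall>k < nt.
           unitary_mat (block L I k k) \<and>
           block (S k) I k k = block L I k k * block R I k k \<and>
           (\<exists>Rinv. inverts_mat (block R I k k) Rinv \<and> inverts_mat Rinv (block R I k k) \<and>
              (\<forall>i. k < i \<and> i < nt \<longrightarrow> block L I i k = block (S k) I i k * Rinv)) \<and>
           (\<exists>Linv. inverts_mat (block L I k k) Linv \<and> inverts_mat Linv (block L I k k) \<and>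
              (\<forall>j. k < j \<and> j < nt \<longrightarrow> block R I k j = Linv * block (S k) I k j)) \<and>
           S (Suc k) = mat n n (\<lambda>(i, j).
              if I ! Suc k \<le> i \<and> I ! Suc k \<le> j
              then S k $$ (i, j) - (\<Sum>l\<in>blk I k. L $$ (i, l) * R $$ (l, j))
              else 0))))"

definition vec_norm2 :: "complex vec \<Rightarrow> real" where
  "vec_norm2 x = sqrt (\<Sum>i<dim_vec x. (cmod (x $ i))\<^sup>2)"

definition spec_norm :: "complex mat \<Rightarrow> real" where
  "spec_norm M = Sup {vec_norm2 (M *\<^sub>v x) | x. x \<in> carrier_vec (dim_col M) \<and> vec_norm2 x \<le> 1}"

definition mat_inv :: "complex mat \<Rightarrow> complex mat" where
  "mat_inv A = (SOME B. B \<in> carrier_mat (dim_row A) (dim_row A) \<and> inverts_mat A B \<and> inverts_mat B A)"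

definition cond2 :: "complex mat \<Rightarrow> real" where
  "cond2 A = spec_norm A * spec_norm (mat_inv A)"

definition diag_dom_cols :: "complex mat \<Rightarrow> bool" where
  "diag_dom_cols A \<longleftrightarrow> (\<forall>j < dim_col A.
     (\<Sum>i \<in> {0..<dim_row A} - {j}. cmod (A $$ (i, j))) \<le> cmod (A $$ (j, j)))"

definition spd :: "complex mat \<Rightarrow> bool" where
  "spd A \<longleftrightarrow> square_mat A \<and> mat_adjoint A = A \<and>
     (\<forall>x \<in> carrier_vec (dim_row A). x \<noteq> 0\<^sub>v (dim_row A) \<longrightarrow>
        Re (\<Sum>i<dim_row A. cnj (x $ i) * (A *\<^sub>v x) $ i) > 0)"

end

theory Submission
  imports Defs "HOL-Analysis.L2_Norm"
begin


locale blu =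
  fixes n nt :: nat and p :: "nat \<Rightarrow> nat" and A L R :: "complex mat" and S :: "nat \<Rightarrow> complex mat"
    and Ri Li :: "nat \<Rightarrow> nat \<Rightarrow> nat \<Rightarrow> complex"
  assumes p0: "p 0 = 0" and pnt: "p nt = n" and pmono: "\<And>i j. i < j \<Longrightarrow> j \<le> nt \<Longrightarrow> p i < p j"
  and Ac: "A \<in> carrier_mat n n" and Lc: "L \<in> carrier_mat n n"
  and S0: "\<And>i j. i<n \<Longrightarrow> j<n \<Longrightarrow> S 0 $$ (i,j) = A $$ (i,j)"
  and E1: "\<And>k i j. k<nt \<Longrightarrow> p (Suc k) \<le> i \<Longrightarrow> i<n \<Longrightarrow> p (Suc k) \<le> j \<Longrightarrow> j < n \<Longrightarrow>
     S (Suc k) $$ (i,j) = S k $$ (i,j) - (\<Sum>l\<in>{p k..<p (Suc k)}. L $$ (i,l) * R $$ (l,j))"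
  and E2: "\<And>k a c. k<nt \<Longrightarrow> a \<in> {p k..<p (Suc k)} \<Longrightarrow> c \<in> {p k..<p (Suc k)} \<Longrightarrow>
     S k $$ (a,c) = (\<Sum>l\<in>{p k..<p (Suc k)}. L $$ (a,l) * R $$ (l,c))"
  and E3: "\<And>k c e. k<nt \<Longrightarrow> c \<in> {p k..<p (Suc k)} \<Longrightarrow> e \<in> {p k..<p (Suc k)} \<Longrightarrow>
     (\<Sum>l\<in>{p k..<p (Suc k)}. R $$ (c,l) * Ri k l e) = (if c = e then 1 else 0)"
  and E4: "\<And>k i l. k<nt \<Longrightarrow> p (Suc k) \<le> i \<Longrightarrow> i<n \<Longrightarrow> l \<in> {p k..<p (Suc k)} \<Longrightarrow>
     L $$ (i,l) = (\<Sum>c\<in>{p k..<p (Suc k)}. S k $$ (i,c) * Ri k c l)"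
  and E5: "\<And>k a e. k<nt \<Longrightarrow> a \<in> {p k..<p (Suc k)} \<Longrightarrow> e \<in> {p k..<p (Suc k)} \<Longrightarrow>
     (\<Sum>l\<in>{p k..<p (Suc k)}. L $$ (a,l) * Li k l e) = (if a = e then 1 else 0)"
  and E6: "\<And>k l j. k<nt \<Longrightarrow> l \<in> {p k..<p (Suc k)} \<Longrightarrow> p (Suc k) \<le> j \<Longrightarrow> j<n \<Longrightarrow>
     R $$ (l,j) = (\<Sum>d\<in>{p k..<p (Suc k)}. Li k l d * S k $$ (d,j))"
  and E7: "\<And>k a b. k<nt \<Longrightarrow> a \<in> {p k..<p (Suc k)} \<Longrightarrow> b \<in> {p k..<p (Suc k)} \<Longrightarrow>
     (\<Sum>i\<in>{p k..<p (Suc k)}. cnj (L $$ (i,a)) * L $$ (i,b)) = (if a = b then 1 else 0)"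
  and E8: "\<And>k i l. k<nt \<Longrightarrow> i < p k \<Longrightarrow> l \<in> {p k..<p (Suc k)} \<Longrightarrow> L $$ (i,l) = 0"
begin

lemma pmono': "i \<le> j \<Longrightarrow> j \<le> nt \<Longrightarrow> p i \<le> p j"
  using pmono[of i j] by (cases "i = j") auto

lemma p_le_n: "k \<le> nt \<Longrightarrow> p k \<le> n"
  using pmono'[of k nt] pnt by simp

lemma K1:
  assumes k: "k < nt" and i: "p k \<le> i" "i < n"
  shows "(\<Sum>c\<in>{p k..<p (Suc k)}. S k $$ (i,c) * (\<Sum>l\<in>{p k..<p (Suc k)}. Ri k c l * q l))
       = (\<Sum>l\<in>{p k..<p (Suc k)}. L $$ (i,l) * q l)"
proof (cases "p (Suc k) \<le> i")
  case True
  have "(\<Sum>c\<in>{p k..<p (Suc k)}. S k $$ (i,c) * (\<Sum>l\<in>{p k..<p (Suc k)}. Ri k c l * q l))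
     = (\<Sum>c\<in>{p k..<p (Suc k)}. \<Sum>l\<in>{p k..<p (Suc k)}. S k $$ (i,c) * Ri k c l * q l)"
    by (simp add: sum_distrib_left mult.assoc)
  also have "\<dots> = (\<Sum>l\<in>{p k..<p (Suc k)}. \<Sum>c\<in>{p k..<p (Suc k)}. S k $$ (i,c) * Ri k c l * q l)"
    by (rule sum.swap)
  also have "\<dots> = (\<Sum>l\<in>{p k..<p (Suc k)}. L $$ (i,l) * q l)"
    by (rule sum.cong, simp, subst E4[OF k True i(2)], simp, simp add: sum_distrib_right)
  finally show ?thesis .
next
  case False
  let ?B = "{p k..<p (Suc k)}"
  have iB: "i \<in> ?B" using False i by auto
  have "(\<Sum>c\<in>?B. S k $$ (i,c) * (\<Sum>l\<in>?B. Ri k c l * q l))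
     = (\<Sum>c\<in>?B. (\<Sum>m\<in>?B. L $$ (i,m) * R $$ (m,c)) * (\<Sum>l\<in>?B. Ri k c l * q l))"
    by (rule sum.cong, simp, subst E2[OF k iB], auto)
  also have "\<dots> = (\<Sum>c\<in>?B. \<Sum>l\<in>?B. \<Sum>m\<in>?B. L $$ (i,m) * (R $$ (m,c) * (Ri k c l * q l)))"
    by (simp add: sum_distrib_left sum_distrib_right mult.assoc)
  also have "\<dots> = (\<Sum>c\<in>?B. \<Sum>m\<in>?B. \<Sum>l\<in>?B. L $$ (i,m) * (R $$ (m,c) * (Ri k c l * q l)))"
    by (rule sum.cong, simp, rule sum.swap)
  also have "\<dots> = (\<Sum>m\<in>?B. \<Sum>c\<in>?B. \<Sum>l\<in>?B. L $$ (i,m) * (R $$ (m,c) * (Ri k c l * q l)))"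
    by (rule sum.swap)
  also have "\<dots> = (\<Sum>m\<in>?B. \<Sum>l\<in>?B. \<Sum>c\<in>?B. L $$ (i,m) * (R $$ (m,c) * (Ri k c l * q l)))"
    by (rule sum.cong, simp, rule sum.swap)
  also have "\<dots> = (\<Sum>m\<in>?B. L $$ (i,m) * (\<Sum>l\<in>?B. (\<Sum>c\<in>?B. R $$ (m,c) * Ri k c l) * q l))"
    by (simp add: sum_distrib_left sum_distrib_right mult.assoc)
  also have "\<dots> = (\<Sum>m\<in>?B. L $$ (i,m) * q m)"
  proof (rule sum.cong, simp)
    fix m assume m: "m \<in> ?B"
    have "(\<Sum>l\<in>?B. (\<Sum>c\<in>?B. R $$ (m,c) * Ri k c l) * q l) = (\<Sum>l\<in>?B. (if m = l then q l else 0))"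
      by (rule sum.cong, simp, subst E3[OF k m], auto)
    also have "\<dots> = q m" using m by simp
    finally show "L $$ (i,m) * (\<Sum>l\<in>?B. (\<Sum>c\<in>?B. R $$ (m,c) * Ri k c l) * q l) = L $$ (i,m) * q m" by simp
  qed
  finally show ?thesis .
qed

lemma K2:
  assumes k: "k < nt" and i: "i \<in> {p k..<p (Suc k)}"
  shows "(\<Sum>l\<in>{p k..<p (Suc k)}. L $$ (i,l) * (\<Sum>d\<in>{p k..<p (Suc k)}. Li k l d * s d)) = s i"
proof -
  let ?B = "{p k..<p (Suc k)}"
  have "(\<Sum>l\<in>?B. L $$ (i,l) * (\<Sum>d\<in>?B. Li k l d * s d)) = (\<Sum>l\<in>?B. \<Sum>d\<in>?B. L $$ (i,l) * Li k l d * s d)"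
    by (simp add: sum_distrib_left mult.assoc)
  also have "\<dots> = (\<Sum>d\<in>?B. \<Sum>l\<in>?B. L $$ (i,l) * Li k l d * s d)" by (rule sum.swap)
  also have "\<dots> = (\<Sum>d\<in>?B. (\<Sum>l\<in>?B. L $$ (i,l) * Li k l d) * s d)"
    by (simp add: sum_distrib_right)
  also have "\<dots> = (\<Sum>d\<in>?B. if i = d then s d else 0)"
    by (rule sum.cong, simp, subst E5[OF k i], auto)
  also have "\<dots> = s i" using i by simp
  finally show ?thesis .
qed


lemma split_T:
  assumes "k < nt"
  shows "(\<Sum>c\<in>{p k..<n}. f c) = (\<Sum>c\<in>{p k..<p (Suc k)}. f c) + (\<Sum>c\<in>{p (Suc k)..<n}. f c)"
  using sum.atLeastLessThan_concat[of "p k" "p (Suc k)" n f] pmono[of k "Suc k"] p_le_n[of "Suc k"] assms by simp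

lemma q_R:
  assumes k: "k < nt" and l: "l \<in> {p k..<p (Suc k)}"
  shows "(\<Sum>d\<in>{p k..<p (Suc k)}. Li k l d * (\<Sum>j\<in>{p (Suc k)..<n}. S k $$ (d,j) * u j))
       = (\<Sum>j\<in>{p (Suc k)..<n}. R $$ (l,j) * u j)"
proof -
  let ?B = "{p k..<p (Suc k)}" and ?T = "{p (Suc k)..<n}"
  have "(\<Sum>d\<in>?B. Li k l d * (\<Sum>j\<in>?T. S k $$ (d,j) * u j)) = (\<Sum>d\<in>?B. \<Sum>j\<in>?T. Li k l d * S k $$ (d,j) * u j)"
    by (simp add: sum_distrib_left mult.assoc)
  also have "\<dots> = (\<Sum>j\<in>?T. \<Sum>d\<in>?B. Li k l d * S k $$ (d,j) * u j)" by (rule sum.swap)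
  also have "\<dots> = (\<Sum>j\<in>?T. R $$ (l,j) * u j)"
    by (rule sum.cong, simp, subst E6[OF k l], auto simp: sum_distrib_right)
  finally show ?thesis .
qed

lemma schur_exists:
  assumes "k \<le> nt"
  shows "\<exists>v. (\<forall>i<p k. (\<Sum>j<n. A $$ (i,j) * v j) = 0) \<and>
     (\<forall>i. p k \<le> i \<and> i < n \<longrightarrow> v i = u i \<and> (\<Sum>j<n. A $$ (i,j) * v j) = (\<Sum>c\<in>{p k..<n}. S k $$ (i,c) * u c))"
  using assms
proof (induction k arbitrary: u)
  case 0
  show ?case
    by (rule exI[of _ u], auto simp: p0 S0 atLeast0LessThan)
next
  case (Suc k)
  hence k: "k < nt" by simp
  let ?B = "{p k..<p (Suc k)}" and ?T = "{p (Suc k)..<n}"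
  define s where "s d = (\<Sum>j\<in>?T. S k $$ (d,j) * u j)" for d
  define q where "q l = (\<Sum>d\<in>?B. Li k l d * s d)" for l
  define u' where "u' c = (if c \<in> ?B then - (\<Sum>l\<in>?B. Ri k c l * q l) else u c)" for c
  obtain v where v1: "\<forall>i<p k. (\<Sum>j<n. A $$ (i,j) * v j) = 0"
    and v2: "\<forall>i. p k \<le> i \<and> i < n \<longrightarrow> v i = u' i \<and> (\<Sum>j<n. A $$ (i,j) * v j) = (\<Sum>c\<in>{p k..<n}. S k $$ (i,c) * u' c)"
    using Suc.IH[of u'] k by auto
  have key: "(\<Sum>j<n. A $$ (i,j) * v j) = s i - (\<Sum>l\<in>?B. L $$ (i,l) * q l)" if i: "p k \<le> i" "i < n" for i
  proof -
    have "(\<Sum>j<n. A $$ (i,j) * v j) = (\<Sum>c\<in>?B. S k $$ (i,c) * u' c) + (\<Sum>c\<in>?T. S k $$ (i,c) * u' c)"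
      using v2 i split_T[OF k] by simp
    also have "(\<Sum>c\<in>?B. S k $$ (i,c) * u' c) = - (\<Sum>c\<in>?B. S k $$ (i,c) * (\<Sum>l\<in>?B. Ri k c l * q l))"
      unfolding sum_negf[symmetric] by (rule sum.cong) (auto simp: u'_def)
    also have "\<dots> = - (\<Sum>l\<in>?B. L $$ (i,l) * q l)" using K1[OF k i] by simp
    also have "(\<Sum>c\<in>?T. S k $$ (i,c) * u' c) = s i"
      unfolding s_def u'_def by (rule sum.cong, auto)
    finally show ?thesis by simp
  qed
  show ?case
  proof (rule exI[of _ v], intro conjI allI impI)
    fix i assume i: "i < p (Suc k)"
    show "(\<Sum>j<n. A $$ (i,j) * v j) = 0"
    proof (cases "i < p k")
      case True thus ?thesis using v1 by auto
    next
      case False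
      hence iB: "i \<in> ?B" using i by auto
      have "i < n" using i p_le_n[of "Suc k"] k by auto
      thus ?thesis using key[of i] False K2[OF k iB, of s] unfolding q_def by simp
    qed
  next
    fix i assume i: "p (Suc k) \<le> i \<and> i < n"
    have pk: "p k \<le> i" using i pmono[of k "Suc k"] k by auto
    show "v i = u i" using v2 i pk unfolding u'_def by auto
    have "(\<Sum>l\<in>?B. L $$ (i,l) * q l) = (\<Sum>l\<in>?B. L $$ (i,l) * (\<Sum>j\<in>?T. R $$ (l,j) * u j))"
      unfolding q_def s_def by (rule sum.cong, simp, subst q_R[OF k], auto)
    also have "\<dots> = (\<Sum>l\<in>?B. \<Sum>j\<in>?T. L $$ (i,l) * R $$ (l,j) * u j)"
      by (simp add: sum_distrib_left mult.assoc)
    also have "\<dots> = (\<Sum>j\<in>?T. \<Sum>l\<in>?B. L $$ (i,l) * R $$ (l,j) * u j)" by (rule sum.swap)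
    also have "\<dots> = (\<Sum>j\<in>?T. (\<Sum>l\<in>?B. L $$ (i,l) * R $$ (l,j)) * u j)"
      by (simp add: sum_distrib_right)
    finally have "(\<Sum>j<n. A $$ (i,j) * v j) = (\<Sum>j\<in>?T. (S k $$ (i,j) - (\<Sum>l\<in>?B. L $$ (i,l) * R $$ (l,j))) * u j)"
      using key[OF pk] i unfolding s_def by (simp add: algebra_simps sum_subtractf)
    also have "\<dots> = (\<Sum>j\<in>?T. S (Suc k) $$ (i,j) * u j)"
      by (rule sum.cong, simp, subst E1[OF k], use i in auto)
    finally show "(\<Sum>j<n. A $$ (i,j) * v j) = (\<Sum>c\<in>?T. S (Suc k) $$ (i,c) * u c)" .
  qed
qed


definition DD :: "nat \<Rightarrow> bool" where
  "DD k \<longleftrightarrow> (\<forall>j. p k \<le> j \<and> j < n \<longrightarrow>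
      (\<Sum>i\<in>{p k..<n}-{j}. cmod (S k $$ (i,j))) \<le> cmod (S k $$ (j,j)))"

lemma swap_offdiag:
  fixes f :: "nat \<Rightarrow> nat \<Rightarrow> real"
  assumes "finite B"
  shows "(\<Sum>c\<in>B. \<Sum>i\<in>B-{c}. f i c) = (\<Sum>i\<in>B. \<Sum>c\<in>B-{i}. f i c)"
proof -
  have "(\<Sum>c\<in>B. \<Sum>i\<in>B-{c}. f i c) = (\<Sum>c\<in>B. \<Sum>i\<in>{i\<in>B. i \<noteq> c}. f i c)"
    by (rule sum.cong, auto intro: sum.cong)
  also have "\<dots> = (\<Sum>i\<in>B. \<Sum>c\<in>{c\<in>B. i \<noteq> c}. f i c)"
    by (rule sum.swap_restrict[OF assms assms])
  also have "\<dots> = (\<Sum>i\<in>B. \<Sum>c\<in>B-{i}. f i c)"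
    by (rule sum.cong, auto intro: sum.cong)
  finally show ?thesis .
qed

lemma N1:
  assumes k: "k < nt" and dd: "DD k"
    and us: "\<And>a. a \<in> {p k..<p (Suc k)} \<Longrightarrow> (\<Sum>c\<in>{p k..<p (Suc k)}. S k $$ (a,c) * u c) = s a"
  shows "(\<Sum>i\<in>{p (Suc k)..<n}. cmod (\<Sum>c\<in>{p k..<p (Suc k)}. S k $$ (i,c) * u c))
       \<le> (\<Sum>a\<in>{p k..<p (Suc k)}. cmod (s a))"
proof -
  let ?B = "{p k..<p (Suc k)}" and ?T = "{p (Suc k)..<n}"
  let ?F = "\<lambda>i c. cmod (S k $$ (i,c)) * cmod (u c)"
  have col: "(\<Sum>i\<in>?T. cmod (S k $$ (i,c))) \<le> cmod (S k $$ (c,c)) - (\<Sum>i\<in>?B-{c}. cmod (S k $$ (i,c)))"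
    if c: "c \<in> ?B" for c
  proof -
    have cn: "p k \<le> c \<and> c < n" using c p_le_n[of "Suc k"] k by auto
    have eq: "{p k..<n}-{c} = (?B-{c}) \<union> ?T" using c pmono[of k "Suc k"] p_le_n[of "Suc k"] k by auto
    have "(\<Sum>i\<in>{p k..<n}-{c}. cmod (S k $$ (i,c))) = (\<Sum>i\<in>?B-{c}. cmod (S k $$ (i,c))) + (\<Sum>i\<in>?T. cmod (S k $$ (i,c)))"
      unfolding eq by (rule sum.union_disjoint, auto)
    thus ?thesis using dd cn unfolding DD_def by auto
  qed
  have "(\<Sum>i\<in>?T. cmod (\<Sum>c\<in>?B. S k $$ (i,c) * u c)) \<le> (\<Sum>i\<in>?T. \<Sum>c\<in>?B. ?F i c)"
    by (rule sum_mono, rule order.trans[OF norm_sum], simp add: norm_mult)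
  also have "\<dots> = (\<Sum>c\<in>?B. (\<Sum>i\<in>?T. cmod (S k $$ (i,c))) * cmod (u c))"
    by (subst sum.swap, simp add: sum_distrib_right)
  also have "\<dots> \<le> (\<Sum>c\<in>?B. (cmod (S k $$ (c,c)) - (\<Sum>i\<in>?B-{c}. cmod (S k $$ (i,c)))) * cmod (u c))"
    by (rule sum_mono, rule mult_right_mono, auto intro: col)
  also have "\<dots> = (\<Sum>c\<in>?B. ?F c c) - (\<Sum>c\<in>?B. \<Sum>i\<in>?B-{c}. ?F i c)"
    by (simp add: sum_subtractf left_diff_distrib sum_distrib_right)
  also have "(\<Sum>c\<in>?B. \<Sum>i\<in>?B-{c}. ?F i c) = (\<Sum>a\<in>?B. \<Sum>c\<in>?B-{a}. ?F a c)"
    by (rule swap_offdiag, simp)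
  also have "(\<Sum>c\<in>?B. ?F c c) - (\<Sum>a\<in>?B. \<Sum>c\<in>?B-{a}. ?F a c) = (\<Sum>a\<in>?B. ?F a a - (\<Sum>c\<in>?B-{a}. ?F a c))"
    by (simp add: sum_subtractf)
  also have "\<dots> \<le> (\<Sum>a\<in>?B. cmod (s a))"
  proof (rule sum_mono)
    fix a assume a: "a \<in> ?B"
    have "s a = S k $$ (a,a) * u a + (\<Sum>c\<in>?B-{a}. S k $$ (a,c) * u c)"
      using us[OF a] sum.remove[of ?B a "\<lambda>c. S k $$ (a,c) * u c"] a by simp
    hence "cmod (S k $$ (a,a) * u a) \<le> cmod (s a) + cmod (\<Sum>c\<in>?B-{a}. S k $$ (a,c) * u c)"
      by (metis add_diff_cancel_right' norm_triangle_ineq4)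
    moreover have "cmod (\<Sum>c\<in>?B-{a}. S k $$ (a,c) * u c) \<le> (\<Sum>c\<in>?B-{a}. ?F a c)"
      by (rule order.trans[OF norm_sum], simp add: norm_mult)
    ultimately show "?F a a - (\<Sum>c\<in>?B-{a}. ?F a c) \<le> cmod (s a)" by (simp add: norm_mult)
  qed
  finally show ?thesis .
qed

lemma DD_step:
  assumes k: "k < nt" and dd: "DD k"
  shows "DD (Suc k)"
  unfolding DD_def
proof (intro allI impI)
  let ?B = "{p k..<p (Suc k)}" and ?T = "{p (Suc k)..<n}"
  fix j assume j: "p (Suc k) \<le> j \<and> j < n"
  define q where "q l = (\<Sum>d\<in>?B. Li k l d * S k $$ (d,j))" for l
  define u where "u c = (\<Sum>l\<in>?B. Ri k c l * q l)" for c
  define w where "w i = (\<Sum>c\<in>?B. S k $$ (i,c) * u c)" for i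
  have pk: "p k \<le> p (Suc k)" using pmono[of k "Suc k"] k by simp
  have wB: "w a = S k $$ (a,j)" if a: "a \<in> ?B" for a
  proof -
    have "a < n" using a p_le_n[of "Suc k"] k by auto
    hence "w a = (\<Sum>l\<in>?B. L $$ (a,l) * q l)" unfolding w_def u_def using K1[OF k, of a] a by auto
    thus ?thesis unfolding q_def using K2[OF k a] by simp
  qed
  have wT: "S (Suc k) $$ (i,j) = S k $$ (i,j) - w i" if i: "i \<in> ?T" for i
  proof -
    have "w i = (\<Sum>l\<in>?B. L $$ (i,l) * q l)" unfolding w_def u_def using K1[OF k, of i] i pk by auto
    also have "\<dots> = (\<Sum>l\<in>?B. L $$ (i,l) * R $$ (l,j))"
      unfolding q_def by (rule sum.cong, simp, subst E6[OF k _ _], use j in auto)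
    finally show ?thesis using E1[OF k, of i j] i j by auto
  qed
  have N: "(\<Sum>i\<in>?T. cmod (w i)) \<le> (\<Sum>a\<in>?B. cmod (S k $$ (a,j)))"
    unfolding w_def by (rule N1[OF k dd], use wB[unfolded w_def] in auto)
  have jT: "j \<in> ?T" using j by auto
  have colj: "(\<Sum>a\<in>?B. cmod (S k $$ (a,j))) + (\<Sum>i\<in>?T-{j}. cmod (S k $$ (i,j))) \<le> cmod (S k $$ (j,j))"
  proof -
    have eq: "{p k..<n}-{j} = ?B \<union> (?T-{j})" using j pk by auto
    have "(\<Sum>i\<in>{p k..<n}-{j}. cmod (S k $$ (i,j))) = (\<Sum>a\<in>?B. cmod (S k $$ (a,j))) + (\<Sum>i\<in>?T-{j}. cmod (S k $$ (i,j)))"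
      unfolding eq by (rule sum.union_disjoint, auto)
    moreover have "(\<Sum>i\<in>{p k..<n}-{j}. cmod (S k $$ (i,j))) \<le> cmod (S k $$ (j,j))"
      using dd j pk unfolding DD_def by (meson le_trans)
    ultimately show ?thesis by linarith
  qed
  have wsplit: "(\<Sum>i\<in>?T. cmod (w i)) = cmod (w j) + (\<Sum>i\<in>?T-{j}. cmod (w i))"
    using sum.remove[of ?T j "\<lambda>i. cmod (w i)"] jT by simp
  have "(\<Sum>i\<in>{p (Suc k)..<n}-{j}. cmod (S (Suc k) $$ (i,j))) = (\<Sum>i\<in>?T-{j}. cmod (S k $$ (i,j) - w i))"
    by (rule sum.cong, simp, subst wT, auto)
  also have "\<dots> \<le> (\<Sum>i\<in>?T-{j}. cmod (S k $$ (i,j)) + cmod (w i))"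
    by (rule sum_mono, rule norm_triangle_ineq4)
  also have "\<dots> \<le> cmod (S k $$ (j,j)) - cmod (w j)"
    using colj N wsplit by (simp add: sum.distrib)
  also have "\<dots> \<le> cmod (S (Suc k) $$ (j,j))"
    using wT[OF jT] norm_triangle_ineq2[of "S k $$ (j,j)" "w j"] by simp
  finally show "(\<Sum>i\<in>{p (Suc k)..<n}-{j}. cmod (S (Suc k) $$ (i,j))) \<le> cmod (S (Suc k) $$ (j,j))" .
qed

lemma DD_all:
  assumes "\<forall>j<n. (\<Sum>i\<in>{0..<n}-{j}. cmod (A $$ (i,j))) \<le> cmod (A $$ (j,j))"
  shows "k \<le> nt \<Longrightarrow> DD k"
proof (induction k)
  case 0
  show ?case unfolding DD_def p0 using assms S0
    by (metis (no_types, lifting) Diff_iff atLeastLessThan_iff sum.cong)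
next
  case (Suc k)
  thus ?case using DD_step by simp
qed


lemma G0:
  assumes k: "k < nt" and i: "i < p k"
  shows "(\<Sum>b\<in>{p k..<p (Suc k)}. L $$ (i,b) * w b) = 0"
  using E8[OF k i] by simp

lemma GU:
  assumes k: "k < nt"
  shows "(\<Sum>i\<in>{p k..<p (Suc k)}. (cmod (\<Sum>b\<in>{p k..<p (Suc k)}. L $$ (i,b) * w b))\<^sup>2)
       = (\<Sum>b\<in>{p k..<p (Suc k)}. (cmod (w b))\<^sup>2)"
proof -
  let ?B = "{p k..<p (Suc k)}"
  let ?g = "\<lambda>i. (\<Sum>b\<in>?B. L $$ (i,b) * w b)"
  have "(\<Sum>i\<in>?B. cnj (?g i) * ?g i) = (\<Sum>i\<in>?B. \<Sum>a\<in>?B. \<Sum>b\<in>?B. cnj (w a) * w b * (cnj (L $$ (i,a)) * L $$ (i,b)))"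
    by (simp add: sum_distrib_left sum_distrib_right algebra_simps)
  also have "\<dots> = (\<Sum>a\<in>?B. \<Sum>i\<in>?B. \<Sum>b\<in>?B. cnj (w a) * w b * (cnj (L $$ (i,a)) * L $$ (i,b)))"
    by (rule sum.swap)
  also have "\<dots> = (\<Sum>a\<in>?B. \<Sum>b\<in>?B. \<Sum>i\<in>?B. cnj (w a) * w b * (cnj (L $$ (i,a)) * L $$ (i,b)))"
    by (rule sum.cong, simp, rule sum.swap)
  also have "\<dots> = (\<Sum>a\<in>?B. \<Sum>b\<in>?B. cnj (w a) * w b * (\<Sum>i\<in>?B. cnj (L $$ (i,a)) * L $$ (i,b)))"
    by (simp add: sum_distrib_left)
  also have "\<dots> = (\<Sum>a\<in>?B. \<Sum>b\<in>?B. if a = b then cnj (w a) * w b else 0)"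
    by (rule sum.cong, simp, rule sum.cong, simp, subst E7[OF k], auto)
  also have "\<dots> = (\<Sum>a\<in>?B. cnj (w a) * w a)" by simp
  finally have "(\<Sum>i\<in>?B. cnj (?g i) * ?g i) = (\<Sum>a\<in>?B. cnj (w a) * w a)" .
  moreover have "\<And>f. complex_of_real (\<Sum>i\<in>?B. (cmod (f i))\<^sup>2) = (\<Sum>i\<in>?B. cnj (f i) * f i)"
    unfolding of_real_sum by (rule sum.cong, simp, metis complex_norm_square mult.commute)
  ultimately have "complex_of_real (\<Sum>i\<in>?B. (cmod (?g i))\<^sup>2) = complex_of_real (\<Sum>b\<in>?B. (cmod (w b))\<^sup>2)"
    by metis
  thus ?thesis using of_real_eq_iff by blast
qed

lemma split_n:
  fixes f :: "nat \<Rightarrow> 'a::comm_monoid_add"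
  assumes k: "k < nt" and z: "\<And>i. i < p k \<Longrightarrow> f i = 0"
  shows "(\<Sum>i<n. f i) = (\<Sum>i\<in>{p k..<p (Suc k)}. f i) + (\<Sum>i\<in>{p (Suc k)..<n}. f i)"
proof -
  have "(\<Sum>i<n. f i) = (\<Sum>i\<in>{0..<p k}. f i) + (\<Sum>i\<in>{p k..<n}. f i)"
    using sum.atLeastLessThan_concat[of 0 "p k" n f] p_le_n[of k] k by (simp add: atLeast0LessThan)
  also have "(\<Sum>i\<in>{0..<p k}. f i) = 0" using z by simp
  finally show ?thesis using split_T[OF k] by simp
qed

lemma blockA:
  assumes k: "k < nt" and dd: "DD k"
  shows "L2_set (\<lambda>i. cmod (\<Sum>b\<in>{p k..<p (Suc k)}. L $$ (i,b) * w b)) {..<n}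
      \<le> (1 + sqrt (real (card {p k..<p (Suc k)}))) * L2_set (\<lambda>b. cmod (w b)) {p k..<p (Suc k)}"
proof -
  let ?B = "{p k..<p (Suc k)}" and ?T = "{p (Suc k)..<n}"
  define g where "g i = (\<Sum>b\<in>?B. L $$ (i,b) * w b)" for i
  define z where "z c = (\<Sum>b\<in>?B. Ri k c b * w b)" for c
  have GT: "(\<Sum>c\<in>?B. S k $$ (i,c) * z c) = g i" if "p k \<le> i" "i < n" for i
    unfolding z_def g_def using K1[OF k that] .
  have X: "L2_set (\<lambda>i. cmod (g i)) ?B = L2_set (\<lambda>b. cmod (w b)) ?B"
    unfolding L2_set_def g_def using GU[OF k] by simp
  have "L2_set (\<lambda>i. cmod (g i)) {..<n} = sqrt ((\<Sum>i\<in>?B. (cmod (g i))\<^sup>2) + (\<Sum>i\<in>?T. (cmod (g i))\<^sup>2))"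
    unfolding L2_set_def using split_n[OF k, of "\<lambda>i. (cmod (g i))\<^sup>2"] G0[OF k] g_def by simp
  also have "\<dots> \<le> L2_set (\<lambda>i. cmod (g i)) ?B + L2_set (\<lambda>i. cmod (g i)) ?T"
    unfolding L2_set_def by (rule sqrt_add_le_add_sqrt, auto intro: sum_nonneg)
  also have "L2_set (\<lambda>i. cmod (g i)) ?T \<le> (\<Sum>i\<in>?T. cmod (g i))"
    by (rule L2_set_le_sum, simp)
  also have "(\<Sum>i\<in>?T. cmod (g i)) = (\<Sum>i\<in>?T. cmod (\<Sum>c\<in>?B. S k $$ (i,c) * z c))"
    by (rule sum.cong, simp, subst GT, use pmono[of k "Suc k"] k in auto)
  also have "\<dots> \<le> (\<Sum>a\<in>?B. cmod (g a))"
    by (rule N1[OF k dd], rule GT, use p_le_n[of "Suc k"] k in auto)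
  also have "\<dots> = (\<Sum>a\<in>?B. \<bar>1\<bar> * \<bar>cmod (g a)\<bar>)" by simp
  also have "\<dots> \<le> L2_set (\<lambda>_. 1) ?B * L2_set (\<lambda>i. cmod (g i)) ?B"
    by (rule L2_set_mult_ineq)
  also have "L2_set (\<lambda>_. 1) ?B = sqrt (real (card ?B))"
    by (simp add: L2_set_constant)
  finally show ?thesis using X by (simp add: algebra_simps g_def)
qed

lemma sum_blocks:
  "m \<le> nt \<Longrightarrow> (\<Sum>j\<in>{0..<p m}. f j) = (\<Sum>k<m. \<Sum>j\<in>{p k..<p (Suc k)}. f j)"
proof (induction m)
  case 0 thus ?case by (simp add: p0)
next
  case (Suc m)
  have "(\<Sum>j\<in>{0..<p (Suc m)}. f j) = (\<Sum>j\<in>{0..<p m}. f j) + (\<Sum>j\<in>{p m..<p (Suc m)}. f j)"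
    using sum.atLeastLessThan_concat[of 0 "p m" "p (Suc m)" f] pmono[of m "Suc m"] Suc.prems by simp
  thus ?case using Suc by simp
qed

lemma L2_sum:
  fixes G :: "nat \<Rightarrow> nat \<Rightarrow> complex"
  shows "finite K \<Longrightarrow> L2_set (\<lambda>i. cmod (\<Sum>k\<in>K. G k i)) X \<le> (\<Sum>k\<in>K. L2_set (\<lambda>i. cmod (G k i)) X)"
proof (induction K rule: finite_induct)
  case empty thus ?case by (simp add: L2_set_def)
next
  case (insert a K)
  have "L2_set (\<lambda>i. cmod (\<Sum>k\<in>insert a K. G k i)) X = L2_set (\<lambda>i. cmod (G a i + (\<Sum>k\<in>K. G k i))) X"
    using insert by simp
  also have "\<dots> \<le> L2_set (\<lambda>i. cmod (G a i) + cmod (\<Sum>k\<in>K. G k i)) X"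
    by (rule L2_set_mono, rule norm_triangle_ineq, simp)
  also have "\<dots> \<le> L2_set (\<lambda>i. cmod (G a i)) X + L2_set (\<lambda>i. cmod (\<Sum>k\<in>K. G k i)) X"
    by (rule L2_set_triangle_ineq)
  finally show ?case using insert by simp
qed

lemma L2_sub:
  assumes "finite Y" "X \<subseteq> Y"
  shows "L2_set f X \<le> L2_set f Y"
  unfolding L2_set_def by (rule real_sqrt_le_mono, rule sum_mono2, use assms in auto)

lemma global_bound:
  assumes C: "C \<ge> 0"
    and blk: "\<And>k w. k < nt \<Longrightarrow> L2_set (\<lambda>i. cmod (\<Sum>b\<in>{p k..<p (Suc k)}. L $$ (i,b) * w b)) {..<n}
                \<le> C * L2_set (\<lambda>b. cmod (w b)) {p k..<p (Suc k)}"
  shows "L2_set (\<lambda>i. cmod (\<Sum>j<n. L $$ (i,j) * x j)) {..<n} \<le> real nt * C * L2_set (\<lambda>j. cmod (x j)) {..<n}"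
proof -
  have "L2_set (\<lambda>i. cmod (\<Sum>j<n. L $$ (i,j) * x j)) {..<n}
      = L2_set (\<lambda>i. cmod (\<Sum>k<nt. \<Sum>b\<in>{p k..<p (Suc k)}. L $$ (i,b) * x b)) {..<n}"
  proof (rule L2_set_cong, simp)
    fix i
    show "cmod (\<Sum>j<n. L $$ (i,j) * x j) = cmod (\<Sum>k<nt. \<Sum>b\<in>{p k..<p (Suc k)}. L $$ (i,b) * x b)"
      using sum_blocks[of nt "\<lambda>j. L $$ (i,j) * x j"] pnt by (simp add: atLeast0LessThan)
  qed
  also have "\<dots> \<le> (\<Sum>k<nt. L2_set (\<lambda>i. cmod (\<Sum>b\<in>{p k..<p (Suc k)}. L $$ (i,b) * x b)) {..<n})"
    by (rule L2_sum, simp)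
  also have "\<dots> \<le> (\<Sum>k<nt. C * L2_set (\<lambda>j. cmod (x j)) {..<n})"
  proof (rule sum_mono)
    fix k assume k: "k \<in> {..<nt}"
    have "L2_set (\<lambda>b. cmod (x b)) {p k..<p (Suc k)} \<le> L2_set (\<lambda>j. cmod (x j)) {..<n}"
      by (rule L2_sub, simp, use p_le_n[of "Suc k"] k in auto)
    thus "L2_set (\<lambda>i. cmod (\<Sum>b\<in>{p k..<p (Suc k)}. L $$ (i,b) * x b)) {..<n} \<le> C * L2_set (\<lambda>j. cmod (x j)) {..<n}"
      using blk[of k x] k C by (meson lessThan_iff mult_left_mono order_trans)
  qed
  also have "\<dots> = real nt * C * L2_set (\<lambda>j. cmod (x j)) {..<n}" by simp
  finally show ?thesis .
qed


definition fm :: "(nat \<Rightarrow> complex) \<Rightarrow> (nat \<Rightarrow> complex) \<Rightarrow> complex" where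
  "fm f g = (\<Sum>i<n. cnj (f i) * (\<Sum>j<n. A $$ (i,j) * g j))"

lemma discr:
  fixes a b c :: real
  assumes "\<And>t. 0 \<le> a + 2 * b * t + c * t\<^sup>2" "0 \<le> c"
  shows "b\<^sup>2 \<le> a * c"
proof (cases "c = 0")
  case True
  show ?thesis
  proof (cases "b = 0")
    case False
    have "0 \<le> a + 2 * b * (- (a + 1) / (2 * b)) + c * (- (a + 1) / (2 * b))\<^sup>2" by (rule assms(1))
    with True False show ?thesis by (simp add: field_simps)
  qed (simp add: True)
next
  case False
  hence c: "c > 0" using assms(2) by simp
  have "0 \<le> a + 2 * b * (- b / c) + c * (- b / c)\<^sup>2" by (rule assms(1))
  hence "0 \<le> a - b\<^sup>2 / c" using c by (simp add: power2_eq_square field_simps)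
  hence "b\<^sup>2 / c \<le> a" by simp
  thus ?thesis using c by (simp add: field_simps mult.commute)
qed

lemma fm_cnj:
  assumes herm: "\<And>i j. i < n \<Longrightarrow> j < n \<Longrightarrow> A $$ (i,j) = cnj (A $$ (j,i))"
  shows "fm g f = cnj (fm f g)"
proof -
  have "cnj (fm f g) = (\<Sum>i<n. \<Sum>j<n. f i * cnj (A $$ (i,j)) * cnj (g j))"
    unfolding fm_def by (simp add: sum_distrib_left mult.assoc)
  also have "\<dots> = (\<Sum>i<n. \<Sum>j<n. cnj (g j) * A $$ (j,i) * f i)"
    by (rule sum.cong, simp, rule sum.cong, simp, subst herm, auto)
  also have "\<dots> = (\<Sum>j<n. \<Sum>i<n. cnj (g j) * A $$ (j,i) * f i)" by (rule sum.swap)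
  also have "\<dots> = fm g f" unfolding fm_def by (simp add: sum_distrib_left mult.assoc)
  finally show ?thesis by simp
qed

lemma fm_expand:
  "fm (\<lambda>i. f i + of_real t * g i) (\<lambda>i. f i + of_real t * g i)
     = fm f f + of_real t * fm f g + of_real t * fm g f + of_real t * of_real t * fm g g"
  unfolding fm_def
  by (simp add: algebra_simps sum.distrib sum_distrib_left)

lemma fm_CS:
  assumes herm: "\<And>i j. i < n \<Longrightarrow> j < n \<Longrightarrow> A $$ (i,j) = cnj (A $$ (j,i))"
    and psd: "\<And>f. 0 \<le> Re (fm f f)"
  shows "(Re (fm f g))\<^sup>2 \<le> Re (fm f f) * Re (fm g g)"
proof (rule discr)
  fix t :: real
  have "Re (fm g f) = Re (fm f g)" using fm_cnj[OF herm, of g f] by simp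
  have "0 \<le> Re (fm (\<lambda>i. f i + of_real t * g i) (\<lambda>i. f i + of_real t * g i))" by (rule psd)
  also have "\<dots> = Re (fm f f) + 2 * Re (fm f g) * t + Re (fm g g) * t\<^sup>2"
    unfolding fm_expand using \<open>Re (fm g f) = Re (fm f g)\<close> by (simp add: power2_eq_square)
  finally show "0 \<le> Re (fm f f) + 2 * Re (fm f g) * t + Re (fm g g) * t\<^sup>2" .
qed (rule psd)

lemma vec_CS:
  "\<bar>Re (\<Sum>i\<in>X. cnj (f i) * g i)\<bar> \<le> L2_set (\<lambda>i. cmod (f i)) X * L2_set (\<lambda>i. cmod (g i)) X"
proof -
  have "\<bar>Re (\<Sum>i\<in>X. cnj (f i) * g i)\<bar> \<le> cmod (\<Sum>i\<in>X. cnj (f i) * g i)" by (rule abs_Re_le_cmod)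
  also have "\<dots> \<le> (\<Sum>i\<in>X. \<bar>cmod (f i)\<bar> * \<bar>cmod (g i)\<bar>)"
    by (rule order.trans[OF norm_sum], simp add: norm_mult)
  also have "\<dots> \<le> L2_set (\<lambda>i. cmod (f i)) X * L2_set (\<lambda>i. cmod (g i)) X" by (rule L2_set_mult_ineq)
  finally show ?thesis .
qed

lemma L2_sq: "(L2_set (\<lambda>i. cmod (f i)) X)\<^sup>2 = Re (\<Sum>i\<in>X. cnj (f i) * f i)"
proof -
  have "(L2_set (\<lambda>i. cmod (f i)) X)\<^sup>2 = (\<Sum>i\<in>X. (cmod (f i))\<^sup>2)"
    unfolding L2_set_def by (simp add: sum_nonneg)
  also have "\<dots> = Re (\<Sum>i\<in>X. cnj (f i) * f i)"
    unfolding Re_sum by (rule sum.cong, simp, metis Re_complex_of_real complex_norm_square mult.commute)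
  finally show ?thesis .
qed

lemma F2:
  assumes herm: "\<And>i j. i < n \<Longrightarrow> j < n \<Longrightarrow> A $$ (i,j) = cnj (A $$ (j,i))"
    and psd: "\<And>f. 0 \<le> Re (fm f f)"
    and al: "0 \<le> \<alpha>"
    and nA: "\<And>f. L2_set (\<lambda>i. cmod (\<Sum>j<n. A $$ (i,j) * f j)) {..<n} \<le> \<alpha> * L2_set (\<lambda>i. cmod (f i)) {..<n}"
  shows "(L2_set (\<lambda>i. cmod (\<Sum>j<n. A $$ (i,j) * v j)) {..<n})\<^sup>2 \<le> \<alpha> * Re (fm v v)"
proof -
  define h where "h i = (\<Sum>j<n. A $$ (i,j) * v j)" for i
  let ?N = "L2_set (\<lambda>i. cmod (h i)) {..<n}"
  have hv: "Re (fm h v) = ?N\<^sup>2" unfolding fm_def L2_sq h_def by simp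
  have "Re (fm h h) \<le> ?N * L2_set (\<lambda>i. cmod (\<Sum>j<n. A $$ (i,j) * h j)) {..<n}"
    unfolding fm_def using vec_CS[of h "\<lambda>i. \<Sum>j<n. A $$ (i,j) * h j" "{..<n}"] by simp
  also have "\<dots> \<le> ?N * (\<alpha> * ?N)" by (rule mult_left_mono[OF nA], simp)
  finally have hh: "Re (fm h h) \<le> \<alpha> * ?N\<^sup>2" by (simp add: power2_eq_square algebra_simps)
  have "(?N\<^sup>2)\<^sup>2 \<le> Re (fm h h) * Re (fm v v)" using fm_CS[OF herm psd, of h v] hv by simp
  also have "\<dots> \<le> (\<alpha> * ?N\<^sup>2) * Re (fm v v)" by (rule mult_right_mono[OF hh psd])
  finally have *: "?N\<^sup>2 * ?N\<^sup>2 \<le> ?N\<^sup>2 * (\<alpha> * Re (fm v v))" by (simp add: power2_eq_square algebra_simps)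
  show ?thesis
  proof (cases "?N = 0")
    case True thus ?thesis using al psd h_def by simp
  next
    case False
    hence "?N\<^sup>2 > 0" by simp
    from mult_left_le_imp_le[OF * this] show ?thesis unfolding h_def .
  qed
qed

lemma F3:
  assumes herm: "\<And>i j. i < n \<Longrightarrow> j < n \<Longrightarrow> A $$ (i,j) = cnj (A $$ (j,i))"
    and psd: "\<And>f. 0 \<le> Re (fm f f)"
    and be: "0 \<le> \<beta>"
    and inv: "\<And>i l. i < n \<Longrightarrow> l < n \<Longrightarrow> (\<Sum>j<n. A $$ (i,j) * Bi j l) = (if i = l then 1 else 0)"
    and nB: "\<And>f. L2_set (\<lambda>i. cmod (\<Sum>j<n. Bi i j * f j)) {..<n} \<le> \<beta> * L2_set (\<lambda>i. cmod (f i)) {..<n}"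
  shows "(L2_set (\<lambda>i. cmod (v i)) {..<n})\<^sup>2 \<le> \<beta> * Re (fm v v)"
proof -
  define h where "h i = (\<Sum>l<n. Bi i l * v l)" for i
  let ?N = "L2_set (\<lambda>i. cmod (v i)) {..<n}"
  have Ah: "(\<Sum>j<n. A $$ (i,j) * h j) = v i" if i: "i < n" for i
  proof -
    have "(\<Sum>j<n. A $$ (i,j) * h j) = (\<Sum>j<n. \<Sum>l<n. A $$ (i,j) * Bi j l * v l)"
      unfolding h_def by (simp add: sum_distrib_left mult.assoc)
    also have "\<dots> = (\<Sum>l<n. \<Sum>j<n. A $$ (i,j) * Bi j l * v l)" by (rule sum.swap)
    also have "\<dots> = (\<Sum>l<n. (\<Sum>j<n. A $$ (i,j) * Bi j l) * v l)" by (simp add: sum_distrib_right)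
    also have "\<dots> = (\<Sum>l<n. if i = l then v l else 0)"
      by (rule sum.cong, simp, subst inv, use i in auto)
    also have "\<dots> = v i" using i by simp
    finally show ?thesis .
  qed
  have vh: "Re (fm v h) = ?N\<^sup>2" unfolding fm_def L2_sq using Ah by simp
  have "Re (fm h h) = Re (\<Sum>i<n. cnj (h i) * v i)" unfolding fm_def using Ah by simp
  also have "\<dots> \<le> L2_set (\<lambda>i. cmod (h i)) {..<n} * ?N" using vec_CS[of h v "{..<n}"] by simp
  also have "\<dots> \<le> (\<beta> * ?N) * ?N" by (rule mult_right_mono, unfold h_def, rule nB, simp)
  finally have hh: "Re (fm h h) \<le> \<beta> * ?N\<^sup>2" by (simp add: power2_eq_square)
  have "(?N\<^sup>2)\<^sup>2 \<le> Re (fm v v) * Re (fm h h)" using fm_CS[OF herm psd, of v h] vh by simp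
  also have "\<dots> \<le> Re (fm v v) * (\<beta> * ?N\<^sup>2)" by (rule mult_left_mono[OF hh psd])
  finally have *: "?N\<^sup>2 * ?N\<^sup>2 \<le> ?N\<^sup>2 * (\<beta> * Re (fm v v))" by (simp add: power2_eq_square algebra_simps)
  show ?thesis
  proof (cases "?N = 0")
    case True thus ?thesis using be psd by simp
  next
    case False
    hence "?N\<^sup>2 > 0" by simp
    from mult_left_le_imp_le[OF * this] show ?thesis .
  qed
qed


lemma blockB:
  assumes k: "k < nt"
    and herm: "\<And>i j. i < n \<Longrightarrow> j < n \<Longrightarrow> A $$ (i,j) = cnj (A $$ (j,i))"
    and psd: "\<And>f. 0 \<le> Re (fm f f)"
    and al: "0 \<le> \<alpha>"
    and nA: "\<And>f. L2_set (\<lambda>i. cmod (\<Sum>j<n. A $$ (i,j) * f j)) {..<n} \<le> \<alpha> * L2_set (\<lambda>i. cmod (f i)) {..<n}"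
    and be: "0 \<le> \<beta>"
    and inv: "\<And>i l. i < n \<Longrightarrow> l < n \<Longrightarrow> (\<Sum>j<n. A $$ (i,j) * Bi j l) = (if i = l then 1 else 0)"
    and nB: "\<And>f. L2_set (\<lambda>i. cmod (\<Sum>j<n. Bi i j * f j)) {..<n} \<le> \<beta> * L2_set (\<lambda>i. cmod (f i)) {..<n}"
  shows "L2_set (\<lambda>i. cmod (\<Sum>b\<in>{p k..<p (Suc k)}. L $$ (i,b) * w b)) {..<n}
      \<le> sqrt (\<alpha> * \<beta>) * L2_set (\<lambda>b. cmod (w b)) {p k..<p (Suc k)}"
proof -
  let ?B = "{p k..<p (Suc k)}" and ?T = "{p (Suc k)..<n}"
  define g where "g i = (\<Sum>b\<in>?B. L $$ (i,b) * w b)" for i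
  define z where "z c = (\<Sum>b\<in>?B. Ri k c b * w b)" for c
  define u where "u c = (if c \<in> ?B then z c else 0)" for c
  have pk: "p k \<le> p (Suc k)" "p (Suc k) \<le> n" using pmono[of k "Suc k"] p_le_n[of "Suc k"] k by auto
  have GT: "(\<Sum>c\<in>?B. S k $$ (i,c) * z c) = g i" if "p k \<le> i" "i < n" for i
    unfolding z_def g_def using K1[OF k that] .
  have g0: "g i = 0" if "i < p k" for i unfolding g_def using G0[OF k that] .
  obtain v where v1: "\<forall>i<p k. (\<Sum>j<n. A $$ (i,j) * v j) = 0"
    and v2: "\<forall>i. p k \<le> i \<and> i < n \<longrightarrow> v i = u i \<and> (\<Sum>j<n. A $$ (i,j) * v j) = (\<Sum>c\<in>{p k..<n}. S k $$ (i,c) * u c)"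
    using schur_exists[of k u] k by auto
  have Av: "(\<Sum>j<n. A $$ (i,j) * v j) = g i" if i: "i < n" for i
  proof (cases "i < p k")
    case True thus ?thesis using v1 g0 by auto
  next
    case False
    hence "(\<Sum>j<n. A $$ (i,j) * v j) = (\<Sum>c\<in>?B. S k $$ (i,c) * u c) + (\<Sum>c\<in>?T. S k $$ (i,c) * u c)"
      using v2 i split_T[OF k] by simp
    also have "(\<Sum>c\<in>?T. S k $$ (i,c) * u c) = 0" unfolding u_def by (rule sum.neutral, auto)
    also have "(\<Sum>c\<in>?B. S k $$ (i,c) * u c) = (\<Sum>c\<in>?B. S k $$ (i,c) * z c)"
      unfolding u_def by (rule sum.cong, auto)
    finally show ?thesis using GT[of i] False i by simp
  qed
  let ?Y = "L2_set (\<lambda>b. cmod (g b)) ?B"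
  let ?V = "L2_set (\<lambda>i. cmod (v i)) {..<n}"
  have Y: "?Y = L2_set (\<lambda>b. cmod (w b)) ?B"
    unfolding L2_set_def g_def using GU[OF k] by simp
  have "fm v v = (\<Sum>i<n. cnj (v i) * g i)" unfolding fm_def using Av by simp
  also have "\<dots> = (\<Sum>i\<in>?B. cnj (v i) * g i) + (\<Sum>i\<in>?T. cnj (v i) * g i)"
    by (rule split_n[OF k], simp add: g0)
  also have "(\<Sum>i\<in>?T. cnj (v i) * g i) = 0"
    by (rule sum.neutral, use v2 pk u_def in auto)
  finally have fmv: "fm v v = (\<Sum>i\<in>?B. cnj (v i) * g i)" by simp
  have R: "Re (fm v v) \<le> ?V * ?Y"
  proof -
    have "Re (fm v v) \<le> L2_set (\<lambda>i. cmod (v i)) ?B * ?Y" using fmv vec_CS[of v g ?B] by simp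
    also have "\<dots> \<le> ?V * ?Y" by (rule mult_right_mono, rule L2_sub, use pk in auto)
    finally show ?thesis .
  qed
  have VY: "?V \<le> \<beta> * ?Y"
  proof (cases "?V = 0")
    case True thus ?thesis using be by simp
  next
    case False
    hence Vp: "?V > 0" using L2_set_nonneg by (metis less_eq_real_def)
    have "?V * ?V \<le> \<beta> * Re (fm v v)" using F3[OF herm psd be inv nB, of v] by (simp add: power2_eq_square)
    also have "\<dots> \<le> \<beta> * (?V * ?Y)" by (rule mult_left_mono[OF R be])
    finally have "?V * ?V \<le> ?V * (\<beta> * ?Y)" by (simp add: algebra_simps)
    thus ?thesis using Vp by (rule mult_left_le_imp_le)
  qed
  have "(L2_set (\<lambda>i. cmod (g i)) {..<n})\<^sup>2 = (L2_set (\<lambda>i. cmod (\<Sum>j<n. A $$ (i,j) * v j)) {..<n})\<^sup>2"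
    using Av by (metis (no_types, lifting) L2_set_cong lessThan_iff)
  also have "\<dots> \<le> \<alpha> * Re (fm v v)" by (rule F2[OF herm psd al nA])
  also have "\<dots> \<le> \<alpha> * (?V * ?Y)" by (rule mult_left_mono[OF R al])
  also have "\<dots> \<le> \<alpha> * ((\<beta> * ?Y) * ?Y)" by (rule mult_left_mono[OF mult_right_mono[OF VY] al], simp)
  also have "\<dots> = (sqrt (\<alpha> * \<beta>) * ?Y)\<^sup>2" using al be by (simp add: power2_eq_square power_mult_distrib)
  finally have "L2_set (\<lambda>i. cmod (g i)) {..<n} \<le> sqrt (\<alpha> * \<beta>) * ?Y"
    by (rule power2_le_imp_le, simp add: al be)
  thus ?thesis using Y g_def by simp
qed

end


lemma mult_entry:
  assumes "X \<in> carrier_mat r m" "Y \<in> carrier_mat m s" "i < r" "j < s"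
  shows "(X * Y) $$ (i,j) = (\<Sum>l<m. X $$ (i,l) * Y $$ (l,j))"
  using assms by (simp add: scalar_prod_def atLeast0LessThan)

lemma mult_mat_vec_entry:
  assumes "M \<in> carrier_mat r m" "i < r"
  shows "(M *\<^sub>v vec m f) $ i = (\<Sum>j<m. M $$ (i,j) * f j)"
  using assms by (simp add: scalar_prod_def atLeast0LessThan)

lemma adjoint_entry:
  assumes "U \<in> carrier_mat r c" "i < c" "j < r"
  shows "mat_adjoint U $$ (i,j) = cnj (U $$ (j,i))" "mat_adjoint U \<in> carrier_mat c r"
  using assms by (auto simp: mat_adjoint_def mat_of_rows_index)

lemma reindex_sum:
  fixes f :: "nat \<Rightarrow> 'a::comm_monoid_add"
  shows "(\<Sum>l<m. f (lo + l)) = (\<Sum>l\<in>{lo..<lo+m}. f l)"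
  using sum.shift_bounds_nat_ivl[of f 0 lo m] by (simp add: atLeast0LessThan add.commute)

lemma pick_ivl: "i < hi - lo \<Longrightarrow> pick {lo..<hi} i = lo + i"
proof (induction i)
  case 0
  thus ?case unfolding pick.simps by (auto intro!: Least_equality)
next
  case (Suc i)
  hence "pick {lo..<hi} i = lo + i" by simp
  thus ?case unfolding pick.simps using Suc.prems by (auto intro!: Least_equality)
qed

lemma vec_norm2_L2: "vec_norm2 x = L2_set (\<lambda>i. cmod (x $ i)) {..<dim_vec x}"
  unfolding vec_norm2_def L2_set_def by simp

lemma spec_norm_le:
  assumes M: "M \<in> carrier_mat n n" and K: "0 \<le> K"
    and b: "\<And>f. L2_set (\<lambda>i. cmod (\<Sum>j<n. M $$ (i,j) * f j)) {..<n} \<le> K * L2_set (\<lambda>i. cmod (f i)) {..<n}"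
  shows "spec_norm M \<le> K"
  unfolding spec_norm_def
proof (rule cSup_least)
  show "{vec_norm2 (M *\<^sub>v x) |x. x \<in> carrier_vec (dim_col M) \<and> vec_norm2 x \<le> 1} \<noteq> {}"
  proof -
    have "vec_norm2 (M *\<^sub>v 0\<^sub>v (dim_col M)) \<in> {vec_norm2 (M *\<^sub>v x) |x. x \<in> carrier_vec (dim_col M) \<and> vec_norm2 x \<le> 1}"
      by (rule CollectI, rule exI[of _ "0\<^sub>v (dim_col M)"], simp add: vec_norm2_def)
    thus ?thesis by blast
  qed
  fix y assume "y \<in> {vec_norm2 (M *\<^sub>v x) |x. x \<in> carrier_vec (dim_col M) \<and> vec_norm2 x \<le> 1}"
  then obtain x where x: "x \<in> carrier_vec n" "vec_norm2 x \<le> 1" and y: "y = vec_norm2 (M *\<^sub>v x)"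
    using M by auto
  have xe: "x = vec n (\<lambda>j. x $ j)" using x by auto
  have "y = L2_set (\<lambda>i. cmod (\<Sum>j<n. M $$ (i,j) * x $ j)) {..<n}"
    unfolding y vec_norm2_L2 using M
    by (subst xe, intro L2_set_cong, auto simp: scalar_prod_def atLeast0LessThan)
  also have "\<dots> \<le> K * L2_set (\<lambda>i. cmod (x $ i)) {..<n}" by (rule b)
  also have "\<dots> \<le> K * 1" using x K by (intro mult_left_mono, auto simp: vec_norm2_L2)
  finally show "y \<le> K" by simp
qed

lemma spec_norm_ge:
  assumes M: "M \<in> carrier_mat n n"
  shows "L2_set (\<lambda>i. cmod (\<Sum>j<n. M $$ (i,j) * f j)) {..<n} \<le> spec_norm M * L2_set (\<lambda>i. cmod (f i)) {..<n}"
proof -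
  let ?SET = "{vec_norm2 (M *\<^sub>v x) |x. x \<in> carrier_vec (dim_col M) \<and> vec_norm2 x \<le> 1}"
  let ?C = "\<Sum>i<n. \<Sum>j<n. cmod (M $$ (i,j))"
  have nv: "vec_norm2 (M *\<^sub>v vec n g) = L2_set (\<lambda>i. cmod (\<Sum>j<n. M $$ (i,j) * g j)) {..<n}" for g
    unfolding vec_norm2_L2 using M by (intro L2_set_cong, auto simp: scalar_prod_def atLeast0LessThan)
  have bdd: "bdd_above ?SET"
  proof (rule bdd_aboveI[of _ ?C])
    fix y assume "y \<in> ?SET"
    then obtain x where x: "x \<in> carrier_vec n" "vec_norm2 x \<le> 1" and y: "y = vec_norm2 (M *\<^sub>v x)"
      using M by auto
    have xe: "x = vec n (\<lambda>j. x $ j)" using x by auto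
    have xj: "cmod (x $ j) \<le> 1" if "j < n" for j
    proof -
      have "cmod (x $ j) \<le> L2_set (\<lambda>i. cmod (x $ i)) {..<n}" by (rule member_le_L2_set, use that in auto)
      thus ?thesis using x by (simp add: vec_norm2_L2)
    qed
    have "y = L2_set (\<lambda>i. cmod (\<Sum>j<n. M $$ (i,j) * x $ j)) {..<n}" unfolding y by (subst xe, rule nv)
    also have "\<dots> \<le> (\<Sum>i<n. cmod (\<Sum>j<n. M $$ (i,j) * x $ j))" by (rule L2_set_le_sum, simp)
    also have "\<dots> \<le> ?C"
    proof (rule sum_mono)
      fix i assume "i \<in> {..<n}"
      show "cmod (\<Sum>j<n. M $$ (i,j) * x $ j) \<le> (\<Sum>j<n. cmod (M $$ (i,j)))"
      proof (rule order.trans[OF norm_sum], rule sum_mono)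
        fix j assume j: "j \<in> {..<n}"
        have "cmod (M $$ (i,j)) * cmod (x $ j) \<le> cmod (M $$ (i,j)) * 1"
          by (rule mult_left_mono, use xj j in auto)
        thus "cmod (M $$ (i,j) * x $ j) \<le> cmod (M $$ (i,j))" by (simp add: norm_mult)
      qed
    qed
    finally show "y \<le> ?C" .
  qed
  let ?r = "L2_set (\<lambda>i. cmod (f i)) {..<n}"
  show ?thesis
  proof (cases "?r = 0")
    case True
    hence "\<forall>j\<in>{..<n}. f j = 0" using L2_set_eq_0_iff[of "{..<n}" "\<lambda>i. cmod (f i)"] by simp
    hence "L2_set (\<lambda>i. cmod (\<Sum>j<n. M $$ (i,j) * f j)) {..<n} = 0" by (simp add: L2_set_def)
    thus ?thesis using True by simp
  next
    case False
    hence r: "?r > 0" using L2_set_nonneg by (metis less_eq_real_def)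
    define g where "g j = f j / complex_of_real ?r" for j
    have ng: "L2_set (\<lambda>i. cmod (g i)) {..<n} = 1"
    proof -
      have "L2_set (\<lambda>i. cmod (g i)) {..<n} = L2_set (\<lambda>i. cmod (f i) * (1 / ?r)) {..<n}"
        unfolding g_def by (rule L2_set_cong, auto simp: norm_divide)
      also have "\<dots> = ?r * (1 / ?r)" using L2_set_left_distrib[of "1/?r" "\<lambda>i. cmod (f i)" "{..<n}"] r by simp
      finally show ?thesis using r by simp
    qed
    have mg: "L2_set (\<lambda>i. cmod (\<Sum>j<n. M $$ (i,j) * g j)) {..<n}
        = L2_set (\<lambda>i. cmod (\<Sum>j<n. M $$ (i,j) * f j)) {..<n} * (1 / ?r)"
    proof -
      have "L2_set (\<lambda>i. cmod (\<Sum>j<n. M $$ (i,j) * g j)) {..<n}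
          = L2_set (\<lambda>i. cmod (\<Sum>j<n. M $$ (i,j) * f j) * (1 / ?r)) {..<n}"
      proof (rule L2_set_cong, simp)
        fix i
        have "(\<Sum>j<n. M $$ (i,j) * g j) = (\<Sum>j<n. M $$ (i,j) * f j) / complex_of_real ?r"
          unfolding g_def by (simp add: sum_divide_distrib)
        thus "cmod (\<Sum>j<n. M $$ (i,j) * g j) = cmod (\<Sum>j<n. M $$ (i,j) * f j) * (1 / ?r)"
          using r by (simp add: norm_divide)
      qed
      also have "\<dots> = L2_set (\<lambda>i. cmod (\<Sum>j<n. M $$ (i,j) * f j)) {..<n} * (1 / ?r)"
        by (rule L2_set_left_distrib[of "1/?r" "\<lambda>i. cmod (\<Sum>j<n. M $$ (i,j) * f j)", symmetric], use r in simp)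
      finally show ?thesis .
    qed
    have "vec_norm2 (M *\<^sub>v vec n g) \<in> ?SET"
    proof -
      have "L2_set (\<lambda>i. cmod (vec n g $ i)) {..<n} = 1" using ng by (metis (no_types, lifting) L2_set_cong index_vec lessThan_iff)
      thus ?thesis using M by (auto simp: vec_norm2_L2 intro!: exI[of _ "vec n g"])
    qed
    hence "vec_norm2 (M *\<^sub>v vec n g) \<le> spec_norm M"
      unfolding spec_norm_def by (rule cSup_upper[OF _ bdd])
    hence "L2_set (\<lambda>i. cmod (\<Sum>j<n. M $$ (i,j) * f j)) {..<n} * (1 / ?r) \<le> spec_norm M"
      using nv mg by simp
    thus ?thesis using r by (simp add: field_simps)
  qed
qed


lemma spec_norm_nonneg:
  assumes M: "M \<in> carrier_mat n n"
  shows "0 \<le> spec_norm M"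
proof (cases "n = 0")
  case True
  let ?SET = "{vec_norm2 (M *\<^sub>v x) |x. x \<in> carrier_vec (dim_col M) \<and> vec_norm2 x \<le> 1}"
  have z: "vec_norm2 (M *\<^sub>v x) = 0" for x using M True by (simp add: vec_norm2_def)
  have "?SET \<subseteq> {0}" using z by auto
  moreover have "vec_norm2 (M *\<^sub>v 0\<^sub>v (dim_col M)) \<in> ?SET"
    by (rule CollectI, rule exI[of _ "0\<^sub>v (dim_col M)"], simp add: vec_norm2_def)
  ultimately have "?SET = {0}" using z by auto
  thus ?thesis unfolding spec_norm_def by simp
next
  case False
  define f :: "nat \<Rightarrow> complex" where "f j = (if j = 0 then 1 else 0)" for j
  have one: "L2_set (\<lambda>i. cmod (f i)) {..<n} = 1"
  proof -
    have "L2_set (\<lambda>i. cmod (f i)) {..<n} = sqrt (\<Sum>i<n. (if i = 0 then 1 else 0))"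
      unfolding L2_set_def f_def by (rule arg_cong[where f=sqrt], rule sum.cong, auto)
    also have "\<dots> = 1" using False by simp
    finally show ?thesis .
  qed
  have "0 \<le> L2_set (\<lambda>i. cmod (\<Sum>j<n. M $$ (i,j) * f j)) {..<n}" by (rule L2_set_nonneg)
  also have "\<dots> \<le> spec_norm M * L2_set (\<lambda>i. cmod (f i)) {..<n}" by (rule spec_norm_ge[OF M])
  finally show ?thesis unfolding one by simp
qed

lemma blocking_facts:
  assumes "is_blocking I n"
  shows "I ! 0 = 0" "I ! num_blocks I = n" "\<And>i j. i < j \<Longrightarrow> j \<le> num_blocks I \<Longrightarrow> I ! i < I ! j"
proof -
  have l: "length I \<ge> 1" "sorted_wrt (<) I" "I ! 0 = 0" "last I = n" using assms unfolding is_blocking_def by auto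
  show "I ! 0 = 0" using l by simp
  have "I \<noteq> []" using l by auto
  thus "I ! num_blocks I = n" using l last_conv_nth[of I] unfolding num_blocks_def by simp
  fix i j assume "i < j" "j \<le> num_blocks I"
  thus "I ! i < I ! j" using sorted_wrt_nth_less[OF l(2)] l(1) unfolding num_blocks_def by simp
qed

lemma find_blk:
  assumes "p 0 = (0::nat)"
  shows "a < p m \<Longrightarrow> \<exists>i<m. p i \<le> a \<and> a < p (Suc i)"
proof (induction m)
  case 0 thus ?case using assms by simp
next
  case (Suc m)
  show ?case
  proof (cases "a < p m")
    case True thus ?thesis using Suc.IH by (meson less_SucI)
  next
    case False thus ?thesis using Suc.prems by auto
  qed
qed

lemma block_facts:
  assumes M: "M \<in> carrier_mat n n" and I: "is_blocking I n" and i: "i < num_blocks I" and j: "j < num_blocks I"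
  shows "block M I i j \<in> carrier_mat (I ! Suc i - I ! i) (I ! Suc j - I ! j)"
    and "a < I ! Suc i - I ! i \<Longrightarrow> b < I ! Suc j - I ! j \<Longrightarrow> block M I i j $$ (a,b) = M $$ (I ! i + a, I ! j + b)"
proof -
  note bf = blocking_facts[OF I]
  have le: "I ! k \<le> n" if "k \<le> num_blocks I" for k
    using bf(2) bf(3)[of k "num_blocks I"] that by (cases "k = num_blocks I", auto)
  have hi: "I ! Suc i \<le> n" "I ! Suc j \<le> n" using le i j by auto
  have c1: "{x. x < dim_row M \<and> x \<in> blk I i} = {I ! i..<I ! Suc i}" using M hi unfolding blk_def by auto
  have c2: "{x. x < dim_col M \<and> x \<in> blk I j} = {I ! j..<I ! Suc j}" using M hi unfolding blk_def by auto
  have d1: "dim_row (block M I i j) = I ! Suc i - I ! i" unfolding block_def dim_submatrix using c1 by simp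
  have d2: "dim_col (block M I i j) = I ! Suc j - I ! j" unfolding block_def dim_submatrix using c2 by simp
  show "block M I i j \<in> carrier_mat (I ! Suc i - I ! i) (I ! Suc j - I ! j)"
    using d1 d2 by auto
  assume a: "a < I ! Suc i - I ! i" and b: "b < I ! Suc j - I ! j"
  show "block M I i j $$ (a,b) = M $$ (I ! i + a, I ! j + b)"
  proof -
    have "block M I i j $$ (a,b) = M $$ (pick (blk I i) a, pick (blk I j) b)"
      unfolding block_def by (rule submatrix_index, simp_all only: c1 c2 card_atLeastLessThan a b)
    also have "pick (blk I i) a = I ! i + a" unfolding blk_def by (rule pick_ivl[OF a])
    also have "pick (blk I j) b = I ! j + b" unfolding blk_def by (rule pick_ivl[OF b])
    finally show ?thesis .
  qed
qed



lemma sqrt_le_powr: "sqrt (real x) \<le> real x powr (3/2)"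
proof (cases "x = 0")
  case True thus ?thesis by simp
next
  case False
  hence x: "1 \<le> real x" by simp
  have "sqrt (real x) = real x powr (1/2)" by (simp add: powr_half_sqrt)
  also have "\<dots> \<le> real x powr (3/2)" by (rule powr_mono, use x in auto)
  finally show ?thesis .
qed

theorem theorem2p8:
  fixes A L R :: "complex mat" and I :: "nat list" and n :: nat
  assumes "A \<in> carrier_mat n n"
    and "is_blocking I n"
    and "block_LU_unitary A I L R"
    and "A = L * R"
  shows "(invertible_mat A \<and> diag_dom_cols A \<longrightarrow>
            spec_norm L \<le> (real (max_block_size I) powr (3/2) + 1) * real (num_blocks I))
       \<and> (spd A \<longrightarrow> spec_norm L \<le> (sqrt (cond2 A) + 1) * real (num_blocks I))"
proof -
  note bf = blocking_facts[OF assms(2)]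
  note Ac = assms(1)
  define nt where "nt = num_blocks I"
  define p where "p k = I ! k" for k
  define m where "m k = p (Suc k) - p k" for k
  have dA: "dim_row A = n" using assms(1) by simp
  have p0: "p 0 = 0" and pnt: "p nt = n" and pm: "\<And>i j. i<j \<Longrightarrow> j \<le> nt \<Longrightarrow> p i < p j"
    using bf unfolding p_def nt_def by auto
  have pm': "p i \<le> p j" if "i \<le> j" "j \<le> nt" for i j using pm[of i j] that by (cases "i = j") auto
  have ple: "p k \<le> n" if "k \<le> nt" for k using pm'[of k nt] pnt that by simp
  have LU: "L \<in> carrier_mat n n \<and> R \<in> carrier_mat n n \<and>
     (\<forall>i j. i < nt \<and> j < nt \<and> i < j \<longrightarrow>
         block L I i j = 0\<^sub>m (card (blk I i)) (card (blk I j))) \<and>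
     (\<forall>i j. i < nt \<and> j < nt \<and> j < i \<longrightarrow>
         block R I i j = 0\<^sub>m (card (blk I i)) (card (blk I j))) \<and>
     (\<exists>S :: nat \<Rightarrow> complex mat.
        S 0 = A \<and>
        (\<forall>k < nt.
           unitary_mat (block L I k k) \<and>
           block (S k) I k k = block L I k k * block R I k k \<and>
           (\<exists>Rinv. inverts_mat (block R I k k) Rinv \<and> inverts_mat Rinv (block R I k k) \<and>
              (\<forall>i. k < i \<and> i < nt \<longrightarrow> block L I i k = block (S k) I i k * Rinv)) \<and>
           (\<exists>Linv. inverts_mat (block L I k k) Linv \<and> inverts_mat Linv (block L I k k) \<and>
              (\<forall>j. k < j \<and> j < nt \<longrightarrow> block R I k j = Linv * block (S k) I k j)) \<and>
           S (Suc k) = mat n n (\<lambda>(i, j).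
              if I ! Suc k \<le> i \<and> I ! Suc k \<le> j
              then S k $$ (i, j) - (\<Sum>l\<in>blk I k. L $$ (i, l) * R $$ (l, j))
              else 0)))"
    using assms(3) unfolding block_LU_unitary_def Let_def dA nt_def by simp
  hence Lc: "L \<in> carrier_mat n n" and Rc: "R \<in> carrier_mat n n"
    and Lz: "\<forall>i j. i < nt \<and> j < nt \<and> i < j \<longrightarrow> block L I i j = 0\<^sub>m (card (blk I i)) (card (blk I j))"
    by auto
  from LU obtain S :: "nat \<Rightarrow> complex mat" where S0: "S 0 = A" and SK: "\<forall>k < nt.
           unitary_mat (block L I k k) \<and>
           block (S k) I k k = block L I k k * block R I k k \<and>
           (\<exists>Rinv. inverts_mat (block R I k k) Rinv \<and> inverts_mat Rinv (block R I k k) \<and>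
              (\<forall>i. k < i \<and> i < nt \<longrightarrow> block L I i k = block (S k) I i k * Rinv)) \<and>
           (\<exists>Linv. inverts_mat (block L I k k) Linv \<and> inverts_mat Linv (block L I k k) \<and>
              (\<forall>j. k < j \<and> j < nt \<longrightarrow> block R I k j = Linv * block (S k) I k j)) \<and>
           S (Suc k) = mat n n (\<lambda>(i, j).
              if I ! Suc k \<le> i \<and> I ! Suc k \<le> j
              then S k $$ (i, j) - (\<Sum>l\<in>blk I k. L $$ (i, l) * R $$ (l, j))
              else 0)" by blast
  have "\<forall>k. \<exists>X. k < nt \<longrightarrow> inverts_mat (block R I k k) X \<and> inverts_mat X (block R I k k) \<and>
              (\<forall>i. k < i \<and> i < nt \<longrightarrow> block L I i k = block (S k) I i k * X)" using SK by blast
  from choice[OF this] obtain RI where RI: "\<And>k. k < nt \<Longrightarrow> inverts_mat (block R I k k) (RI k) \<and> inverts_mat (RI k) (block R I k k) \<and>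
              (\<forall>i. k < i \<and> i < nt \<longrightarrow> block L I i k = block (S k) I i k * RI k)" by blast
  have "\<forall>k. \<exists>X. k < nt \<longrightarrow> inverts_mat (block L I k k) X \<and> inverts_mat X (block L I k k) \<and>
              (\<forall>j. k < j \<and> j < nt \<longrightarrow> block R I k j = X * block (S k) I k j)" using SK by blast
  from choice[OF this] obtain LI where LI: "\<And>k. k < nt \<Longrightarrow> inverts_mat (block L I k k) (LI k) \<and> inverts_mat (LI k) (block L I k k) \<and>
              (\<forall>j. k < j \<and> j < nt \<longrightarrow> block R I k j = LI k * block (S k) I k j)" by blast
  have Sc: "S k \<in> carrier_mat n n" if k: "k < nt" for k
  proof (cases k)
    case 0 thus ?thesis using S0 Ac by simp
  next
    case (Suc k')
    hence "k' < nt" using k by simp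
    thus ?thesis using SK Suc by auto
  qed
  have BC: "block M I i j \<in> carrier_mat (m i) (m j)" if "M \<in> carrier_mat n n" "i < nt" "j < nt" for M :: "complex mat" and i j
    using block_facts(1)[OF that(1) assms(2)] that unfolding m_def p_def nt_def by simp
  have BE: "block M I i j $$ (a,b) = M $$ (p i + a, p j + b)"
    if "M \<in> carrier_mat n n" "i < nt" "j < nt" "a < m i" "b < m j" for M :: "complex mat" and i j a b
    using block_facts(2)[OF that(1) assms(2)] that unfolding m_def p_def nt_def by simp
  have RS: "(\<Sum>l<m k. f (p k + l)) = (\<Sum>l\<in>{p k..<p (Suc k)}. f l)" if k: "k < nt" for k and f :: "nat \<Rightarrow> complex"
    using reindex_sum[of f "p k" "m k"] pm[of k "Suc k"] k unfolding m_def by simp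
  have inv_dims: "X \<in> carrier_mat d d" if "Y \<in> carrier_mat d d" "inverts_mat Y X" "inverts_mat X Y" for X Y :: "complex mat" and d
  proof -
    have "dim_col (Y * X) = dim_col (1\<^sub>m (dim_row Y) :: complex mat)" using that(2) unfolding inverts_mat_def by simp
    hence c: "dim_col X = d" using that(1) by simp
    have "dim_col (X * Y) = dim_col (1\<^sub>m (dim_row X) :: complex mat)" using that(3) unfolding inverts_mat_def by simp
    hence r: "dim_row X = d" using that(1) by simp
    show ?thesis using c r by auto
  qed
  have RIc: "RI k \<in> carrier_mat (m k) (m k)" if "k < nt" for k
    using inv_dims[OF BC[OF Rc that that]] RI[OF that] by blast
  have LIc: "LI k \<in> carrier_mat (m k) (m k)" if "k < nt" for k
    using inv_dims[OF BC[OF Lc that that]] LI[OF that] by blast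
  define Ri where "Ri k c e = RI k $$ (c - p k, e - p k)" for k c e
  define Li where "Li k c e = LI k $$ (c - p k, e - p k)" for k c e
  have S0': "\<And>i j. i<n \<Longrightarrow> j<n \<Longrightarrow> S 0 $$ (i,j) = A $$ (i,j)" using S0 by simp
  have blkk: "blk I k = {p k..<p (Suc k)}" for k unfolding blk_def p_def by simp
  have inB: "a - p k < m k" "p k + (a - p k) = a" if "a \<in> {p k..<p (Suc k)}" for a k
    using that unfolding m_def by auto
  have E1: "\<And>k i j. k<nt \<Longrightarrow> p (Suc k) \<le> i \<Longrightarrow> i<n \<Longrightarrow> p (Suc k) \<le> j \<Longrightarrow> j < n \<Longrightarrow>
     S (Suc k) $$ (i,j) = S k $$ (i,j) - (\<Sum>l\<in>{p k..<p (Suc k)}. L $$ (i,l) * R $$ (l,j))"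
  proof -
    fix k i j assume k: "k<nt" and ij: "p (Suc k) \<le> i" "i<n" "p (Suc k) \<le> j" "j < n"
    have "S (Suc k) = mat n n (\<lambda>(i, j).
              if I ! Suc k \<le> i \<and> I ! Suc k \<le> j
              then S k $$ (i, j) - (\<Sum>l\<in>blk I k. L $$ (i, l) * R $$ (l, j))
              else 0)" using SK k by blast
    thus "S (Suc k) $$ (i,j) = S k $$ (i,j) - (\<Sum>l\<in>{p k..<p (Suc k)}. L $$ (i,l) * R $$ (l,j))"
      using ij unfolding blkk by (simp add: p_def)
  qed
  have E2: "\<And>k a c. k<nt \<Longrightarrow> a \<in> {p k..<p (Suc k)} \<Longrightarrow> c \<in> {p k..<p (Suc k)} \<Longrightarrow>
     S k $$ (a,c) = (\<Sum>l\<in>{p k..<p (Suc k)}. L $$ (a,l) * R $$ (l,c))"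
  proof -
    fix k a c assume k: "k<nt" and a: "a \<in> {p k..<p (Suc k)}" and c: "c \<in> {p k..<p (Suc k)}"
    have "S k $$ (a,c) = block (S k) I k k $$ (a - p k, c - p k)"
      using BE[OF Sc[OF k] k k inB(1)[OF a] inB(1)[OF c]] inB(2)[OF a] inB(2)[OF c] by simp
    also have "\<dots> = (block L I k k * block R I k k) $$ (a - p k, c - p k)" using SK k by simp
    also have "\<dots> = (\<Sum>l<m k. block L I k k $$ (a - p k, l) * block R I k k $$ (l, c - p k))"
      by (rule mult_entry[OF BC[OF Lc k k] BC[OF Rc k k] inB(1)[OF a] inB(1)[OF c]])
    also have "\<dots> = (\<Sum>l<m k. L $$ (a, p k + l) * R $$ (p k + l, c))"
      by (rule sum.cong, simp, simp add: BE[OF Lc k k inB(1)[OF a]] BE[OF Rc k k _ inB(1)[OF c]] inB(2)[OF a] inB(2)[OF c])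
    also have "\<dots> = (\<Sum>l\<in>{p k..<p (Suc k)}. L $$ (a,l) * R $$ (l,c))" by (rule RS[OF k])
    finally show "S k $$ (a,c) = (\<Sum>l\<in>{p k..<p (Suc k)}. L $$ (a,l) * R $$ (l,c))" .
  qed
  have E3: "\<And>k c e. k<nt \<Longrightarrow> c \<in> {p k..<p (Suc k)} \<Longrightarrow> e \<in> {p k..<p (Suc k)} \<Longrightarrow>
     (\<Sum>l\<in>{p k..<p (Suc k)}. R $$ (c,l) * Ri k l e) = (if c = e then 1 else 0)"
  proof -
    fix k c e assume k: "k<nt" and c: "c \<in> {p k..<p (Suc k)}" and e: "e \<in> {p k..<p (Suc k)}"
    have "(\<Sum>l\<in>{p k..<p (Suc k)}. R $$ (c,l) * Ri k l e) = (\<Sum>l<m k. R $$ (c, p k + l) * Ri k (p k + l) e)"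
      by (rule RS[OF k, symmetric])
    also have "\<dots> = (\<Sum>l<m k. block R I k k $$ (c - p k, l) * RI k $$ (l, e - p k))"
      by (rule sum.cong, simp, simp add: BE[OF Rc k k inB(1)[OF c]] inB(2)[OF c] Ri_def)
    also have "\<dots> = (block R I k k * RI k) $$ (c - p k, e - p k)"
      by (rule mult_entry[OF BC[OF Rc k k] RIc[OF k] inB(1)[OF c] inB(1)[OF e], symmetric])
    also have "\<dots> = (1\<^sub>m (m k)) $$ (c - p k, e - p k)"
      using RI[OF k] BC[OF Rc k k] unfolding inverts_mat_def by simp
    also have "\<dots> = (if c = e then 1 else 0)" using inB[OF c] inB[OF e] by (auto simp: m_def)
    finally show "(\<Sum>l\<in>{p k..<p (Suc k)}. R $$ (c,l) * Ri k l e) = (if c = e then 1 else 0)" .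
  qed
  have later: "k < i0" if k: "k < nt" and i0: "i0 < nt" "p (Suc k) \<le> i" "i < p (Suc i0)" for k i0 i
  proof (rule ccontr)
    assume "\<not> k < i0"
    hence "p (Suc i0) \<le> p (Suc k)" using pm'[of "Suc i0" "Suc k"] k by simp
    thus False using i0 by simp
  qed
  have E4: "\<And>k i l. k<nt \<Longrightarrow> p (Suc k) \<le> i \<Longrightarrow> i<n \<Longrightarrow> l \<in> {p k..<p (Suc k)} \<Longrightarrow>
     L $$ (i,l) = (\<Sum>c\<in>{p k..<p (Suc k)}. S k $$ (i,c) * Ri k c l)"
  proof -
    fix k i l assume k: "k<nt" and i: "p (Suc k) \<le> i" "i<n" and l: "l \<in> {p k..<p (Suc k)}"
    obtain i0 where i0: "i0 < nt" "p i0 \<le> i" "i < p (Suc i0)" using find_blk[of p i nt] p0 pnt i by auto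
    have ki: "k < i0" using later[OF k i0(1) i(1) i0(3)] .
    have ii: "i - p i0 < m i0" "p i0 + (i - p i0) = i" using i0 unfolding m_def by auto
    have "L $$ (i,l) = block L I i0 k $$ (i - p i0, l - p k)"
      using BE[OF Lc i0(1) k ii(1) inB(1)[OF l]] ii(2) inB(2)[OF l] by simp
    also have "\<dots> = (block (S k) I i0 k * RI k) $$ (i - p i0, l - p k)" using RI[OF k] ki i0 by simp
    also have "\<dots> = (\<Sum>c<m k. block (S k) I i0 k $$ (i - p i0, c) * RI k $$ (c, l - p k))"
      by (rule mult_entry[OF BC[OF Sc[OF k] i0(1) k] RIc[OF k] ii(1) inB(1)[OF l]])
    also have "\<dots> = (\<Sum>c<m k. S k $$ (i, p k + c) * Ri k (p k + c) l)"
      by (rule sum.cong, simp, simp add: BE[OF Sc[OF k] i0(1) k ii(1)] ii(2) Ri_def)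
    also have "\<dots> = (\<Sum>c\<in>{p k..<p (Suc k)}. S k $$ (i,c) * Ri k c l)" by (rule RS[OF k])
    finally show "L $$ (i,l) = (\<Sum>c\<in>{p k..<p (Suc k)}. S k $$ (i,c) * Ri k c l)" .
  qed
  have E5: "\<And>k a e. k<nt \<Longrightarrow> a \<in> {p k..<p (Suc k)} \<Longrightarrow> e \<in> {p k..<p (Suc k)} \<Longrightarrow>
     (\<Sum>l\<in>{p k..<p (Suc k)}. L $$ (a,l) * Li k l e) = (if a = e then 1 else 0)"
  proof -
    fix k c e assume k: "k<nt" and c: "c \<in> {p k..<p (Suc k)}" and e: "e \<in> {p k..<p (Suc k)}"
    have "(\<Sum>l\<in>{p k..<p (Suc k)}. L $$ (c,l) * Li k l e) = (\<Sum>l<m k. L $$ (c, p k + l) * Li k (p k + l) e)"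
      by (rule RS[OF k, symmetric])
    also have "\<dots> = (\<Sum>l<m k. block L I k k $$ (c - p k, l) * LI k $$ (l, e - p k))"
      by (rule sum.cong, simp, simp add: BE[OF Lc k k inB(1)[OF c]] inB(2)[OF c] Li_def)
    also have "\<dots> = (block L I k k * LI k) $$ (c - p k, e - p k)"
      by (rule mult_entry[OF BC[OF Lc k k] LIc[OF k] inB(1)[OF c] inB(1)[OF e], symmetric])
    also have "\<dots> = (1\<^sub>m (m k)) $$ (c - p k, e - p k)"
      using LI[OF k] BC[OF Lc k k] unfolding inverts_mat_def by simp
    also have "\<dots> = (if c = e then 1 else 0)" using inB[OF c] inB[OF e] by (auto simp: m_def)
    finally show "(\<Sum>l\<in>{p k..<p (Suc k)}. L $$ (c,l) * Li k l e) = (if c = e then 1 else 0)" .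
  qed
  have E6: "\<And>k l j. k<nt \<Longrightarrow> l \<in> {p k..<p (Suc k)} \<Longrightarrow> p (Suc k) \<le> j \<Longrightarrow> j<n \<Longrightarrow>
     R $$ (l,j) = (\<Sum>d\<in>{p k..<p (Suc k)}. Li k l d * S k $$ (d,j))"
  proof -
    fix k l j assume k: "k<nt" and j: "p (Suc k) \<le> j" "j<n" and l: "l \<in> {p k..<p (Suc k)}"
    obtain j0 where j0: "j0 < nt" "p j0 \<le> j" "j < p (Suc j0)" using find_blk[of p j nt] p0 pnt j by auto
    have kj: "k < j0" using later[OF k j0(1) j(1) j0(3)] .
    have jj: "j - p j0 < m j0" "p j0 + (j - p j0) = j" using j0 unfolding m_def by auto
    have "R $$ (l,j) = block R I k j0 $$ (l - p k, j - p j0)"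
      using BE[OF Rc k j0(1) inB(1)[OF l] jj(1)] jj(2) inB(2)[OF l] by simp
    also have "\<dots> = (LI k * block (S k) I k j0) $$ (l - p k, j - p j0)" using LI[OF k] kj j0 by simp
    also have "\<dots> = (\<Sum>d<m k. LI k $$ (l - p k, d) * block (S k) I k j0 $$ (d, j - p j0))"
      by (rule mult_entry[OF LIc[OF k] BC[OF Sc[OF k] k j0(1)] inB(1)[OF l] jj(1)])
    also have "\<dots> = (\<Sum>d<m k. Li k l (p k + d) * S k $$ (p k + d, j))"
      by (rule sum.cong, simp, simp add: BE[OF Sc[OF k] k j0(1) _ jj(1)] jj(2) Li_def)
    also have "\<dots> = (\<Sum>d\<in>{p k..<p (Suc k)}. Li k l d * S k $$ (d,j))" by (rule RS[OF k])
    finally show "R $$ (l,j) = (\<Sum>d\<in>{p k..<p (Suc k)}. Li k l d * S k $$ (d,j))" .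
  qed
  have E7: "\<And>k a b. k<nt \<Longrightarrow> a \<in> {p k..<p (Suc k)} \<Longrightarrow> b \<in> {p k..<p (Suc k)} \<Longrightarrow>
     (\<Sum>i\<in>{p k..<p (Suc k)}. cnj (L $$ (i,a)) * L $$ (i,b)) = (if a = b then 1 else 0)"
  proof -
    fix k a b assume k: "k<nt" and a: "a \<in> {p k..<p (Suc k)}" and b: "b \<in> {p k..<p (Suc k)}"
    let ?U = "block L I k k"
    have U: "?U \<in> carrier_mat (m k) (m k)" by (rule BC[OF Lc k k])
    have "(\<Sum>i\<in>{p k..<p (Suc k)}. cnj (L $$ (i,a)) * L $$ (i,b)) = (\<Sum>i<m k. cnj (L $$ (p k + i,a)) * L $$ (p k + i,b))"
      by (rule RS[OF k, symmetric])
    also have "\<dots> = (\<Sum>i<m k. mat_adjoint ?U $$ (a - p k, i) * ?U $$ (i, b - p k))"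
      by (rule sum.cong, simp, simp add: adjoint_entry(1)[OF U] inB[OF a] inB[OF b] BE[OF Lc k k])
    also have "\<dots> = (mat_adjoint ?U * ?U) $$ (a - p k, b - p k)"
      by (rule mult_entry[OF adjoint_entry(2)[OF U] U inB(1)[OF a] inB(1)[OF b], symmetric],
          use inB(1)[OF a] in auto)
    also have "\<dots> = (1\<^sub>m (m k)) $$ (a - p k, b - p k)"
      using SK k U unfolding unitary_mat_def by auto
    also have "\<dots> = (if a = b then 1 else 0)" using inB[OF a] inB[OF b] by (auto simp: m_def)
    finally show "(\<Sum>i\<in>{p k..<p (Suc k)}. cnj (L $$ (i,a)) * L $$ (i,b)) = (if a = b then 1 else 0)" .
  qed
  have E8: "\<And>k i l. k<nt \<Longrightarrow> i < p k \<Longrightarrow> l \<in> {p k..<p (Suc k)} \<Longrightarrow> L $$ (i,l) = 0"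
  proof -
    fix k i l assume k: "k<nt" and i: "i < p k" and l: "l \<in> {p k..<p (Suc k)}"
    obtain i0 where i0: "i0 < k" "p i0 \<le> i" "i < p (Suc i0)" using find_blk[of p i k] p0 i by auto
    have i0n: "i0 < nt" using i0 k by simp
    have ii: "i - p i0 < m i0" "p i0 + (i - p i0) = i" using i0 unfolding m_def by auto
    have "L $$ (i,l) = block L I i0 k $$ (i - p i0, l - p k)"
      using BE[OF Lc i0n k ii(1) inB(1)[OF l]] ii(2) inB(2)[OF l] by simp
    also have "\<dots> = (0\<^sub>m (card (blk I i0)) (card (blk I k)) :: complex mat) $$ (i - p i0, l - p k)"
      using Lz i0 k by auto
    also have "\<dots> = 0" using ii(1) inB(1)[OF l] unfolding blkk m_def by simp
    finally show "L $$ (i,l) = 0" .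
  qed
  interpret B: blu n nt p A L R S Ri Li
    by (rule blu.intro[OF p0 pnt pm Ac Lc S0' E1 E2 E3 E4 E5 E6 E7 E8])
  have part_a: "spec_norm L \<le> (real (max_block_size I) powr (3/2) + 1) * real (num_blocks I)"
    if dd: "diag_dom_cols A"
  proof -
    have dd': "\<forall>j<n. (\<Sum>i\<in>{0..<n}-{j}. cmod (A $$ (i,j))) \<le> cmod (A $$ (j,j))"
      using dd Ac unfolding diag_dom_cols_def by simp
    let ?nb = "max_block_size I"
    let ?C = "real ?nb powr (3/2) + 1"
    have mnb: "m k \<le> ?nb" if k: "k < nt" for k
    proof -
      have fin: "finite {I ! Suc k - I ! k | k. k < num_blocks I}"
      proof -
        have "{I ! Suc k - I ! k | k. k < num_blocks I} = (\<lambda>k. I ! Suc k - I ! k) ` {..<num_blocks I}" by auto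
        thus ?thesis by simp
      qed
      have "m k \<in> insert 0 {I ! Suc k - I ! k | k. k < num_blocks I}"
        using k unfolding m_def p_def nt_def by auto
      thus ?thesis unfolding max_block_size_def using fin by simp
    qed
    have blk: "L2_set (\<lambda>i. cmod (\<Sum>b\<in>{p k..<p (Suc k)}. L $$ (i,b) * w b)) {..<n}
                \<le> ?C * L2_set (\<lambda>b. cmod (w b)) {p k..<p (Suc k)}" if k: "k < nt" for k w
    proof -
      have "sqrt (real (card {p k..<p (Suc k)})) \<le> sqrt (real ?nb)"
        using mnb[OF k] unfolding m_def by simp
      also have "\<dots> \<le> real ?nb powr (3/2)" by (rule sqrt_le_powr)
      finally have "1 + sqrt (real (card {p k..<p (Suc k)})) \<le> ?C" by simp
      hence "(1 + sqrt (real (card {p k..<p (Suc k)}))) * L2_set (\<lambda>b. cmod (w b)) {p k..<p (Suc k)}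
           \<le> ?C * L2_set (\<lambda>b. cmod (w b)) {p k..<p (Suc k)}" by (rule mult_right_mono, simp)
      thus ?thesis using B.blockA[OF k B.DD_all[OF dd'], of w] k by linarith
    qed
    have "spec_norm L \<le> ?C * real nt"
    proof (rule spec_norm_le[OF Lc])
      show "0 \<le> ?C * real nt" by simp
      fix f
      show "L2_set (\<lambda>i. cmod (\<Sum>j<n. L $$ (i, j) * f j)) {..<n} \<le> ?C * real nt * L2_set (\<lambda>i. cmod (f i)) {..<n}"
        using B.global_bound[of ?C f] blk by (simp add: mult.commute mult.left_commute)
    qed
    thus ?thesis unfolding nt_def .
  qed
  have part_b: "spec_norm L \<le> (sqrt (cond2 A) + 1) * real (num_blocks I)" if spd: "spd A"
  proof -
    have herm: "A $$ (i,j) = cnj (A $$ (j,i))" if "i < n" "j < n" for i j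
    proof -
      have "mat_adjoint A = A" using spd unfolding spd_def by simp
      hence "A $$ (i,j) = mat_adjoint A $$ (i,j)" by simp
      also have "\<dots> = cnj (A $$ (j,i))" using adjoint_entry(1)[OF Ac] that by simp
      finally show ?thesis .
    qed
    have pos: "0 < Re (\<Sum>i<n. cnj (x $ i) * (A *\<^sub>v x) $ i)" if "x \<in> carrier_vec n" "x \<noteq> 0\<^sub>v n" for x
      using spd that dA unfolding spd_def by simp
    have psd: "0 \<le> Re (B.fm f f)" for f
    proof (cases "\<forall>i<n. f i = 0")
      case True thus ?thesis unfolding B.fm_def by simp
    next
      case False
      hence ne: "vec n f \<noteq> 0\<^sub>v n" by (metis index_vec index_zero_vec(1))
      have "B.fm f f = (\<Sum>i<n. cnj (vec n f $ i) * (A *\<^sub>v vec n f) $ i)"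
        unfolding B.fm_def by (rule sum.cong, simp, simp add: mult_mat_vec_entry[OF Ac])
      thus ?thesis using pos[OF _ ne] by simp
    qed
    have detA: "det A \<noteq> 0"
    proof
      assume "det A = 0"
      then obtain v where v: "v \<in> carrier_vec n" "v \<noteq> 0\<^sub>v n" "A *\<^sub>v v = 0\<^sub>v n"
        using det_0_iff_vec_prod_zero[OF Ac] by blast
      have "(\<Sum>i<n. cnj (v $ i) * (A *\<^sub>v v) $ i) = 0" using v(3) by simp
      thus False using pos[OF v(1,2)] by simp
    qed
    from det_non_zero_imp_unit[OF Ac detA, of "()"]
    obtain B0 where B0: "B0 \<in> carrier_mat n n" "B0 * A = 1\<^sub>m n" "A * B0 = 1\<^sub>m n"
      unfolding Units_def ring_mat_def by auto
    have "\<exists>B. B \<in> carrier_mat (dim_row A) (dim_row A) \<and> inverts_mat A B \<and> inverts_mat B A"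
      using B0 dA unfolding inverts_mat_def by auto
    from someI_ex[OF this] have Bi: "mat_inv A \<in> carrier_mat n n" "A * mat_inv A = 1\<^sub>m n"
      unfolding mat_inv_def inverts_mat_def dA by auto
    let ?Bi = "\<lambda>i j. mat_inv A $$ (i,j)"
    have inv: "(\<Sum>j<n. A $$ (i,j) * ?Bi j l) = (if i = l then 1 else 0)" if "i < n" "l < n" for i l
      using mult_entry[OF Ac Bi(1) that] Bi(2) that by simp
    let ?al = "spec_norm A" and ?be = "spec_norm (mat_inv A)"
    have al: "0 \<le> ?al" by (rule spec_norm_nonneg[OF Ac])
    have be: "0 \<le> ?be" by (rule spec_norm_nonneg[OF Bi(1)])
    have nA: "L2_set (\<lambda>i. cmod (\<Sum>j<n. A $$ (i,j) * f j)) {..<n} \<le> ?al * L2_set (\<lambda>i. cmod (f i)) {..<n}" for f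
      by (rule spec_norm_ge[OF Ac])
    have nB: "L2_set (\<lambda>i. cmod (\<Sum>j<n. ?Bi i j * f j)) {..<n} \<le> ?be * L2_set (\<lambda>i. cmod (f i)) {..<n}" for f
      by (rule spec_norm_ge[OF Bi(1)])
    let ?C = "sqrt (?al * ?be)"
    have "spec_norm L \<le> (sqrt (cond2 A) + 1) * real nt"
    proof (rule spec_norm_le[OF Lc])
      show "0 \<le> (sqrt (cond2 A) + 1) * real nt" unfolding cond2_def using al be by simp
      fix f
      have "L2_set (\<lambda>i. cmod (\<Sum>j<n. L $$ (i, j) * f j)) {..<n} \<le> real nt * ?C * L2_set (\<lambda>i. cmod (f i)) {..<n}"
      proof -
        have blk: "\<And>k w. k < nt \<Longrightarrow> L2_set (\<lambda>i. cmod (\<Sum>b\<in>{p k..<p (Suc k)}. L $$ (i,b) * w b)) {..<n}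
                \<le> ?C * L2_set (\<lambda>b. cmod (w b)) {p k..<p (Suc k)}"
          using B.blockB[OF _ herm psd al nA be inv nB] by blast
        show ?thesis using B.global_bound[of ?C f, OF _ blk] al be by simp
      qed
      also have "\<dots> \<le> (sqrt (cond2 A) + 1) * real nt * L2_set (\<lambda>i. cmod (f i)) {..<n}"
        unfolding cond2_def by (rule mult_right_mono, simp_all add: algebra_simps)
      finally show "L2_set (\<lambda>i. cmod (\<Sum>j<n. L $$ (i, j) * f j)) {..<n} \<le> (sqrt (cond2 A) + 1) * real nt * L2_set (\<lambda>i. cmod (f i)) {..<n}" .
    qed
    thus ?thesis unfolding nt_def .
  qed
  show ?thesis using part_a part_b by blast
qed


end
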